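(* Let $\alpha,\beta>0$ and $f$ as in the context. Let $(\mathbf{V}^0,\mathbf{P}^0)\in\ell^\infty(\mathbb{Z})\times\ell^\infty(\mathbb{Z})$ be nonnegative and not identically zero, and let $(\mathbf{V},\mathbf{P})$ be the unique global classical solution of $$V_j'(t)=-2\alpha V_j(t)+\beta(P_j(t)+P_{j+1}(t)),\qquad P_j'(t)=f(P_j(t))+\alpha(V_j(t)+V_{j-1}(t))-2\beta P_j(t),\qquad t>0,\ j\in\mathbb{Z},$$ with $(\mathbf{V}(0),\mathbf{P}(0))=(\mathbf{V}^0,\mathbf{P}^0)$. Then $\lim_{t\to+\infty}(V_j(t),P_j(t))=(\beta/\alpha,1)$ locally uniformly in $j\in\mathbb{Z}$.
   Context: $f\in\mathscr{C}^1([0,1])$ satisfies $f(0)=f(1)=0$ and $0<f(u)\le f'(0)u$ for $u\in(0,1)$, extended to a locally Lipschitz function on $\mathbb{R}$ negative on $\mathbb{R}\setminus[0,1]$. Existence and uniqueness of a bounded global classical solution ($V_j,P_j\in\mathscr{C}^1([0,\infty))$) for such data is established in the paper. *)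

theory Defs
  imports "HOL-Analysis.Analysis"
begin

definition kpp_nonlinearity :: "(real \<Rightarrow> real) \<Rightarrow> bool" where
  "kpp_nonlinearity f \<longleftrightarrow>
     (\<exists>f'. continuous_on {0..1} f' \<and>
           (\<forall>u\<in>{0..1}. (f has_real_derivative f' u) (at u within {0..1})) \<and>
           (\<forall>u\<in>{0<..<1}. 0 < f u \<and> f u \<le> f' 0 * u)) \<and>
     f 0 = 0 \<and> f 1 = 0 \<and>
     (\<forall>R. \<exists>L. \<forall>x y. \<bar>x\<bar> \<le> R \<longrightarrow> \<bar>y\<bar> \<le> R \<longrightarrow> \<bar>f x - f y\<bar> \<le> L * \<bar>x - y\<bar>) \<and>
     (\<forall>u. u \<notin> {0..1} \<longrightarrow> f u < 0)"

end

theory Submission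
  imports Defs
begin

lemma touch_contra:
  fixes w :: "real \<Rightarrow> real"
  assumes "ta < ts" "(w has_real_derivative D) (at ts)" "D < 0" "0 \<le> w ts"
    "\<forall>t. ta \<le> t \<and> t < ts \<longrightarrow> w t < 0"
  shows False
proof -
  from DERIV_neg_dec_left[OF assms(2,3)] obtain d where d: "d>0" "\<forall>h>0. h<d \<longrightarrow> w ts < w (ts - h)" by blast
  define h where "h = min (d/2) ((ts-ta)/2)"
  have h1: "h \<le> (ts-ta)/2" using min.cobounded2[of "d/2" "(ts-ta)/2"] unfolding h_def .
  have h2: "h > 0" "h < d" using assms(1) d(1) unfolding h_def by auto
  have A: "w ts < w (ts - h)" using d(2) h2 by auto
  have "ta \<le> ts - h" "ts - h < ts" using h1 h2 by auto
  then have "w (ts - h) < 0" using assms(5) by auto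
  then show False using A assms(4) by linarith
qed

lemma left_limit_le:
  fixes h :: "real \<Rightarrow> real"
  assumes "ta < ts" "continuous_on {ta..ts} h" "\<forall>t. ta \<le> t \<and> t < ts \<longrightarrow> h t < 0"
  shows "h ts \<le> 0"
proof (rule ccontr)
  assume "\<not> h ts \<le> 0"
  then have pos: "h ts > 0" by simp
  have "ts \<in> {ta..ts}" using assms(1) by auto
  then obtain d where d: "d > 0" "\<forall>t\<in>{ta..ts}. dist t ts < d \<longrightarrow> dist (h t) (h ts) < h ts"
    using assms(2) pos unfolding continuous_on_iff by metis
  define t where "t = max ta (ts - d/2)"
  have "t \<in> {ta..ts}" "dist t ts < d" "t < ts" using d(1) assms(1) unfolding t_def dist_real_def by auto
  then have "dist (h t) (h ts) < h ts" "h t < 0" using d(2) assms(3) by auto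
  then show False unfolding dist_real_def by auto
qed

lemma int_abs_le_sq: "\<bar>real_of_int j\<bar> \<le> (real_of_int j)^2"
proof (cases "j = 0")
  case False
  then have "1 \<le> \<bar>real_of_int j\<bar>" by linarith
  then have "\<bar>real_of_int j\<bar> * 1 \<le> \<bar>real_of_int j\<bar> * \<bar>real_of_int j\<bar>"
    by (intro mult_left_mono) auto
  then show ?thesis by (simp add: power2_eq_square abs_mult[symmetric])
qed simp

lemma comparison:
  fixes x y :: "int \<Rightarrow> real \<Rightarrow> real" and ta T K R tb :: real and k :: int
  assumes K: "0 \<le> K"
    and xc: "\<And>j. continuous_on {ta..T} (x j)" and yc: "\<And>j. continuous_on {ta..T} (y j)"
    and bnd: "\<And>j t. t \<in> {ta..T} \<Longrightarrow> x j t \<le> R \<and> y j t \<le> R"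
    and init: "\<And>j. x j ta \<le> 0 \<and> y j ta \<le> 0"
    and dx: "\<And>j t. ta < t \<Longrightarrow> t \<le> T \<Longrightarrow> 0 < x j t \<Longrightarrow> \<exists>D. (x j has_real_derivative D) (at t) \<and> D \<le> K * (x j t + max 0 (y j t) + max 0 (y (j+1) t))"
    and dy: "\<And>j t. ta < t \<Longrightarrow> t \<le> T \<Longrightarrow> 0 < y j t \<Longrightarrow> \<exists>D. (y j has_real_derivative D) (at t) \<and> D \<le> K * (y j t + max 0 (x j t) + max 0 (x (j-1) t))"
    and tb: "tb \<in> {ta..T}"
  shows "x k tb \<le> 0 \<and> y k tb \<le> 0"
proof (rule ccontr)
  assume "\<not> (x k tb \<le> 0 \<and> y k tb \<le> 0)"
  define v where "v = max (x k tb) (y k tb)"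
  have vpos: "v > 0" using \<open>\<not> _\<close> unfolding v_def by auto
  have vR: "v \<le> R" using bnd[OF tb] unfolding v_def by auto
  define g where "g = (\<lambda>j::int. 1 + (real_of_int j)^2)"
  define \<Lambda> where "\<Lambda> = 5*K + 1"
  define E where "E = (\<lambda>t. exp (\<Lambda>*(t - ta)))"
  have g1: "\<And>j. 1 \<le> g j" unfolding g_def by simp
  have g3a: "\<And>j. g (j+1) \<le> 3 * g j" unfolding g_def
  proof -
    fix j :: int
    have "0 \<le> (2*real_of_int j - 1)^2" by simp
    then show "1 + (real_of_int (j+1))^2 \<le> 3 * (1 + (real_of_int j)^2)" by (simp add: power2_eq_square algebra_simps)
  qed
  have g3b: "\<And>j. g (j-1) \<le> 3 * g j" unfolding g_def
  proof -
    fix j :: int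
    have "0 \<le> (2*real_of_int j + 1)^2" by simp
    then show "1 + (real_of_int (j-1))^2 \<le> 3 * (1 + (real_of_int j)^2)" by (simp add: power2_eq_square algebra_simps)
  qed
  have \<Lambda>pos: "\<Lambda> > 0" unfolding \<Lambda>_def using K by simp
  have E1: "\<And>t. ta \<le> t \<Longrightarrow> 1 \<le> E t" unfolding E_def using \<Lambda>pos by simp
  have Epos: "\<And>t. 0 < E t" unfolding E_def by simp
  define \<epsilon> where "\<epsilon> = v / (2 * g k * E tb)"
  have gkpos: "g k > 0" using g1[of k] by simp
  have \<epsilon>pos: "\<epsilon> > 0" unfolding \<epsilon>_def using vpos gkpos Epos[of tb] by simp
  have \<epsilon>k: "\<epsilon> * g k * E tb = v / 2" unfolding \<epsilon>_def using gkpos Epos[of tb] by simp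
  define I where "I = {j. \<epsilon> * g j \<le> R}"
  have finI: "finite I"
  proof -
    define n where "n = \<lceil>R/\<epsilon>\<rceil>"
    have "I \<subseteq> {-n..n}"
    proof
      fix j assume "j \<in> I"
      then have "\<epsilon> * g j \<le> R" unfolding I_def by simp
      then have "g j \<le> R/\<epsilon>" using \<epsilon>pos by (simp add: field_simps)
      moreover have "\<bar>real_of_int j\<bar> \<le> g j" using int_abs_le_sq[of j] unfolding g_def by simp
      ultimately have "\<bar>real_of_int j\<bar> \<le> R/\<epsilon>" by linarith
      then have "\<bar>real_of_int j\<bar> \<le> real_of_int n" unfolding n_def by linarith
      then show "j \<in> {-n..n}" by auto
    qed
    then show ?thesis using finite_subset by blast
  qed
  define W where "W = (\<lambda>j t. x j t - \<epsilon> * g j * E t)"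
  define Z where "Z = (\<lambda>j t. y j t - \<epsilon> * g j * E t)"
  have outI: "W j t < 0 \<and> Z j t < 0" if "j \<notin> I" "t \<in> {ta..T}" for j t
  proof -
    have "R < \<epsilon> * g j" using that(1) unfolding I_def by simp
    also have "\<dots> \<le> \<epsilon> * g j * E t" using E1[of t] that(2) \<epsilon>pos g1[of j] by simp
    finally have "R < \<epsilon> * g j * E t" .
    then show ?thesis using bnd[OF that(2), of j] unfolding W_def Z_def by linarith
  qed
  have Ec: "continuous_on A E" for A unfolding E_def by (intro continuous_intros)
  have Wc: "continuous_on {ta..T} (W j)" for j unfolding W_def by (intro continuous_intros xc Ec)
  have Zc: "continuous_on {ta..T} (Z j)" for j unfolding Z_def by (intro continuous_intros yc Ec)
  define S where "S = {t \<in> {ta..T}. \<exists>j\<in>I. 0 \<le> W j t \<or> 0 \<le> Z j t}"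
  have kI: "k \<in> I"
  proof -
    have "\<epsilon> * g k \<le> \<epsilon> * g k * E tb" using E1[of tb] tb \<epsilon>pos gkpos by simp
    then show ?thesis unfolding I_def using \<epsilon>k vR vpos by simp
  qed
  have t1S: "tb \<in> S"
  proof -
    have "0 \<le> W k tb \<or> 0 \<le> Z k tb" unfolding W_def Z_def using \<epsilon>k vpos v_def by (auto simp: max_def split: if_splits)
    then show ?thesis unfolding S_def using tb kI by auto
  qed
  have closedS: "closed S"
  proof -
    have "S = (\<Union>j\<in>I. {t \<in> {ta..T}. (\<lambda>t. 0) t \<le> W j t} \<union> {t \<in> {ta..T}. (\<lambda>t. 0) t \<le> Z j t})"
      unfolding S_def by auto
    also have "closed \<dots>"
      by (intro closed_UN finI ballI closed_Un continuous_on_closed_Collect_le Wc Zc continuous_on_const closed_atLeastAtMost)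
    finally show ?thesis .
  qed
  define ts where "ts = Inf S"
  have bddS: "bdd_below S" unfolding S_def by (rule bdd_belowI[of _ ta]) auto
  have tsS: "ts \<in> S" unfolding ts_def using closed_contains_Inf[OF _ bddS closedS] t1S by auto
  have tsle: "ts \<le> t" if "t \<in> S" for t unfolding ts_def using cInf_lower[OF that bddS] .
  have tsT: "ts \<in> {ta..T}" using tsS unfolding S_def by auto
  have tsgt: "ta < ts"
  proof (rule ccontr)
    assume "\<not> ta < ts"
    then have "ts = ta" using tsT by auto
    then obtain j where "0 \<le> W j ta \<or> 0 \<le> Z j ta" using tsS unfolding S_def by auto
    moreover have "0 < \<epsilon> * g j * E ta" using \<epsilon>pos g1[of j] Epos[of ta] by (intro mult_pos_pos) auto
    then have "W j ta < 0" "Z j ta < 0" using init[of j] unfolding W_def Z_def by auto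
    ultimately show False by auto
  qed
  have before: "W j t < 0 \<and> Z j t < 0" if "ta \<le> t" "t < ts" for j t
  proof (cases "j \<in> I")
    case True
    have "t \<in> {ta..T}" using that tsT by auto
    moreover have "t \<notin> S" using tsle that(2) by force
    ultimately show ?thesis using True unfolding S_def by auto
  next
    case False
    then show ?thesis using outI that tsT by auto
  qed
  have sub: "{ta..ts} \<subseteq> {ta..T}" using tsT by auto
  have atts: "W j ts \<le> 0 \<and> Z j ts \<le> 0" for j
    using left_limit_le[OF tsgt continuous_on_subset[OF Wc sub]] left_limit_le[OF tsgt continuous_on_subset[OF Zc sub]]
      before by auto
  have xle: "max 0 (x j ts) \<le> \<epsilon> * g j * E ts" for j
    using atts[of j] \<epsilon>pos g1[of j] Epos[of ts] unfolding W_def by (auto intro!: mult_nonneg_nonneg)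
  have yle: "max 0 (y j ts) \<le> \<epsilon> * g j * E ts" for j
    using atts[of j] \<epsilon>pos g1[of j] Epos[of ts] unfolding Z_def by (auto intro!: mult_nonneg_nonneg)
  define q where "q = \<epsilon> * E ts"
  have qpos: "q > 0" unfolding q_def using \<epsilon>pos Epos[of ts] by simp
  have Eder: "(E has_real_derivative \<Lambda> * E ts) (at ts)" unfolding E_def
    by (auto intro!: derivative_eq_intros)
  from tsS obtain j where jI: "j \<in> I" and j0: "0 \<le> W j ts \<or> 0 \<le> Z j ts" unfolding S_def by auto
  show False
  proof (cases "0 \<le> W j ts")
    case True
    then have eq: "x j ts = q * g j" using atts[of j] unfolding W_def q_def by auto
    then have "0 < x j ts" using qpos g1[of j] by simp
    then obtain D where D: "(x j has_real_derivative D) (at ts)"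
      "D \<le> K * (x j ts + max 0 (y j ts) + max 0 (y (j+1) ts))"
      using dx[of ts j] tsgt tsT by auto
    have e1: "max 0 (y j ts) \<le> q * g j" using yle[of j] unfolding q_def by (simp add: mult_ac)
    have "max 0 (y (j+1) ts) \<le> q * g (j+1)" using yle[of "j+1"] unfolding q_def by (simp add: mult_ac)
    also have "\<dots> \<le> q * (3 * g j)" using g3a[of j] qpos by (intro mult_left_mono) auto
    finally have "x j ts + max 0 (y j ts) + max 0 (y (j+1) ts) \<le> 5 * (q * g j)" using eq e1 by linarith
    then have "K * (x j ts + max 0 (y j ts) + max 0 (y (j+1) ts)) \<le> K * (5 * (q * g j))" using K by (rule mult_left_mono)
    then have "D \<le> K * (5 * (q * g j))" using D(2) by linarith
    have der: "(W j has_real_derivative D - \<epsilon> * g j * (\<Lambda> * E ts)) (at ts)"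
      unfolding W_def using DERIV_diff[OF D(1) DERIV_cmult[OF Eder, of "\<epsilon> * g j"]] by simp
    have "D - \<epsilon> * g j * (\<Lambda> * E ts) = D - (5*K+1) * (q * g j)" unfolding \<Lambda>_def q_def by (simp add: algebra_simps)
    also have "\<dots> < 0"
    proof -
      have "0 < q * g j" using qpos g1[of j] by simp
      moreover have "(5*K+1) * (q * g j) = K * (5 * (q * g j)) + q * g j" by (simp add: algebra_simps)
      ultimately show ?thesis using \<open>D \<le> K * (5 * (q * g j))\<close> by linarith
    qed
    finally show False using touch_contra[OF tsgt der] True before by auto
  next
    case False
    then have True': "0 \<le> Z j ts" using j0 by auto
    then have eq: "y j ts = q * g j" using atts[of j] unfolding Z_def q_def by auto
    then have "0 < y j ts" using qpos g1[of j] by simp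
    then obtain D where D: "(y j has_real_derivative D) (at ts)"
      "D \<le> K * (y j ts + max 0 (x j ts) + max 0 (x (j-1) ts))"
      using dy[of ts j] tsgt tsT by auto
    have e1: "max 0 (x j ts) \<le> q * g j" using xle[of j] unfolding q_def by (simp add: mult_ac)
    have "max 0 (x (j-1) ts) \<le> q * g (j-1)" using xle[of "j-1"] unfolding q_def by (simp add: mult_ac)
    also have "\<dots> \<le> q * (3 * g j)" using g3b[of j] qpos by (intro mult_left_mono) auto
    finally have "y j ts + max 0 (x j ts) + max 0 (x (j-1) ts) \<le> 5 * (q * g j)" using eq e1 by linarith
    then have "K * (y j ts + max 0 (x j ts) + max 0 (x (j-1) ts)) \<le> K * (5 * (q * g j))" using K by (rule mult_left_mono)
    then have "D \<le> K * (5 * (q * g j))" using D(2) by linarith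
    have der: "(Z j has_real_derivative D - \<epsilon> * g j * (\<Lambda> * E ts)) (at ts)"
      unfolding Z_def using DERIV_diff[OF D(1) DERIV_cmult[OF Eder, of "\<epsilon> * g j"]] by simp
    have "D - \<epsilon> * g j * (\<Lambda> * E ts) = D - (5*K+1) * (q * g j)" unfolding \<Lambda>_def q_def by (simp add: algebra_simps)
    also have "\<dots> < 0"
    proof -
      have "0 < q * g j" using qpos g1[of j] by simp
      moreover have "(5*K+1) * (q * g j) = K * (5 * (q * g j)) + q * g j" by (simp add: algebra_simps)
      ultimately show ?thesis using \<open>D \<le> K * (5 * (q * g j))\<close> by linarith
    qed
    finally show False using touch_contra[OF tsgt der] True' before by auto
  qed
qed

lemma kpp_facts:
  assumes "kpp_nonlinearity f"
  shows "f 0 = 0" "f 1 = 0" "\<And>u. u \<notin> {0..1} \<Longrightarrow> f u < 0" "\<And>u. 0 < u \<Longrightarrow> u < 1 \<Longrightarrow> 0 < f u"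
    "\<And>R. \<exists>L\<ge>0. \<forall>x y. \<bar>x\<bar> \<le> R \<longrightarrow> \<bar>y\<bar> \<le> R \<longrightarrow> \<bar>f x - f y\<bar> \<le> L * \<bar>x - y\<bar>"
proof -
  show "f 0 = 0" "f 1 = 0" "\<And>u. u \<notin> {0..1} \<Longrightarrow> f u < 0" "\<And>u. 0 < u \<Longrightarrow> u < 1 \<Longrightarrow> 0 < f u"
    using assms unfolding kpp_nonlinearity_def by auto
  fix R :: real
  obtain L where L: "\<forall>x y. \<bar>x\<bar> \<le> R \<longrightarrow> \<bar>y\<bar> \<le> R \<longrightarrow> \<bar>f x - f y\<bar> \<le> L * \<bar>x - y\<bar>"
    using assms unfolding kpp_nonlinearity_def by blast
  have "\<forall>x y. \<bar>x\<bar> \<le> R \<longrightarrow> \<bar>y\<bar> \<le> R \<longrightarrow> \<bar>f x - f y\<bar> \<le> max L 0 * \<bar>x - y\<bar>"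
  proof (intro allI impI)
    fix x y :: real assume "\<bar>x\<bar> \<le> R" "\<bar>y\<bar> \<le> R"
    then have "\<bar>f x - f y\<bar> \<le> L * \<bar>x - y\<bar>" using L by auto
    also have "\<dots> \<le> max L 0 * \<bar>x - y\<bar>" by (intro mult_right_mono) auto
    finally show "\<bar>f x - f y\<bar> \<le> max L 0 * \<bar>x - y\<bar>" .
  qed
  then show "\<exists>L\<ge>0. \<forall>x y. \<bar>x\<bar> \<le> R \<longrightarrow> \<bar>y\<bar> \<le> R \<longrightarrow> \<bar>f x - f y\<bar> \<le> L * \<bar>x - y\<bar>"
    by (intro exI[of _ "max L 0"]) auto
qed

lemma kpp_cont:
  assumes "kpp_nonlinearity f"
  shows "continuous_on A f"
proof -
  have "isCont f x" for x
  proof -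
    obtain L where L: "L \<ge> 0" "\<forall>u v. \<bar>u\<bar> \<le> \<bar>x\<bar> + 1 \<longrightarrow> \<bar>v\<bar> \<le> \<bar>x\<bar> + 1 \<longrightarrow> \<bar>f u - f v\<bar> \<le> L * \<bar>u - v\<bar>"
      using kpp_facts(5)[OF assms] by blast
    show ?thesis unfolding continuous_at_eps_delta
    proof (intro allI impI)
      fix e :: real assume e: "e > 0"
      show "\<exists>d>0. \<forall>x'. dist x' x < d \<longrightarrow> dist (f x') (f x) < e"
      proof (intro exI[of _ "min 1 (e/(L+1))"] conjI allI impI)
        show "0 < min 1 (e/(L+1))" using e L by auto
        fix y assume "dist y x < min 1 (e/(L+1))"
        then have y: "\<bar>y - x\<bar> < 1" "\<bar>y - x\<bar> < e/(L+1)" unfolding dist_real_def by auto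
        then have "\<bar>f y - f x\<bar> \<le> L * \<bar>y - x\<bar>" using L(2) by auto
        also have "\<dots> \<le> (L+1) * \<bar>y - x\<bar>" by (intro mult_right_mono) auto
        also have "\<dots> < (L+1) * (e/(L+1))" using y(2) L(1) by (intro mult_strict_left_mono) auto
        also have "\<dots> = e" using L(1) by simp
        finally show "dist (f y) (f x) < e" unfolding dist_real_def .
      qed
    qed
  qed
  then show ?thesis by (intro continuous_at_imp_continuous_on) auto
qed

lemma kpp_lin_lower:
  assumes f: "kpp_nonlinearity f" and eta: "0 < \<eta>" "\<eta> < 1"
  shows "\<exists>r0>0. \<forall>u. 0 < u \<and> u \<le> 1 - \<eta> \<longrightarrow> r0 * u \<le> f u"
proof -
  obtain f' where der: "\<forall>u\<in>{0..1}. (f has_real_derivative f' u) (at u within {0..1})"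
    and pos: "\<forall>u\<in>{0<..<1}. 0 < f u \<and> f u \<le> f' 0 * u"
    using f unfolding kpp_nonlinearity_def by blast
  have f0: "f 0 = 0" using kpp_facts[OF f] by simp
  define d where "d = f' 0"
  have "(1/2::real) \<in> {0<..<1}" by auto
  then have "0 < f (1/2) \<and> f (1/2) \<le> d * (1/2)" using pos unfolding d_def by blast
  then have dpos: "d > 0" by linarith
  have "((\<lambda>y. (f y - f 0) / (y - 0)) \<longlongrightarrow> d) (at 0 within {0..1})"
  proof -
    have "(f has_real_derivative f' 0) (at 0 within {0..1})" using der by auto
    then show ?thesis unfolding d_def has_field_derivative_iff .
  qed
  then have "eventually (\<lambda>y. dist ((f y - f 0) / (y - 0)) d < d/2) (at 0 within {0..1})"
    using dpos unfolding tendsto_iff by (metis half_gt_zero)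
  then obtain \<delta> where \<delta>: "\<delta> > 0" "\<forall>y\<in>{0..1}. y \<noteq> 0 \<and> dist y 0 < \<delta> \<longrightarrow> dist ((f y - f 0) / (y - 0)) d < d/2"
    unfolding eventually_at by blast
  have small: "d/2 * u \<le> f u" if "0 < u" "u \<le> 1" "u < \<delta>" for u
  proof -
    have "dist (f u / u) d < d/2" using \<delta>(2) that f0 by (auto simp: dist_real_def)
    then have "\<bar>f u / u - d\<bar> < d/2" unfolding dist_real_def .
    then have "d/2 \<le> f u / u" by linarith
    then show ?thesis using that(1) by (simp add: field_simps)
  qed
  define \<delta>1 where "\<delta>1 = min (\<delta>/2) (1 - \<eta>)"
  have d1: "0 < \<delta>1" "\<delta>1 \<le> 1 - \<eta>" "\<delta>1 < \<delta>" using \<delta>(1) eta unfolding \<delta>1_def by auto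
  obtain u0 where u0: "u0 \<in> {\<delta>1..1-\<eta>}" "\<forall>u\<in>{\<delta>1..1-\<eta>}. f u0 \<le> f u"
    using continuous_attains_inf[of "{\<delta>1..1-\<eta>}" f] kpp_cont[OF f] d1 by auto
  have m1: "f u0 > 0" using kpp_facts(4)[OF f, of u0] u0(1) d1 eta by auto
  define r0 where "r0 = min (d/2) (f u0)"
  show ?thesis
  proof (intro exI[of _ r0] conjI allI impI)
    show "r0 > 0" unfolding r0_def using dpos m1 by auto
    fix u assume u: "0 < u \<and> u \<le> 1 - \<eta>"
    show "r0 * u \<le> f u"
    proof (cases "u < \<delta>")
      case True
      have "r0 * u \<le> d/2 * u" unfolding r0_def using u by (intro mult_right_mono) auto
      also have "\<dots> \<le> f u" using small[of u] u eta True by auto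
      finally show ?thesis .
    next
      case False
      have "r0 * u \<le> f u0 * u" unfolding r0_def using u by (intro mult_right_mono) auto
      also have "\<dots> \<le> f u0 * 1" using m1 u eta by (intro mult_left_mono) auto
      also have "\<dots> \<le> f u" using u0(2) u False d1 by auto
      finally show ?thesis .
    qed
  qed
qed

lemma cos_lb: "1 - x^2/2 \<le> cos (x::real)"
proof -
  have "cos x = cos (2 * (x/2))" by simp
  also have "\<dots> = 1 - 2 * sin (x/2) ^ 2" by (rule cos_double_sin)
  finally have c: "cos x = 1 - 2 * sin (x/2) ^ 2" .
  have "\<bar>sin (x/2)\<bar> \<le> \<bar>x/2\<bar>" by (rule abs_sin_x_le_abs_x)
  then have "\<bar>sin (x/2)\<bar>^2 \<le> \<bar>x/2\<bar>^2" by (intro power_mono) auto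
  then have "sin (x/2)^2 \<le> x^2/4" by (simp add: power2_eq_square)
  then show ?thesis using c by linarith
qed

lemma hm: "0 \<le> a \<Longrightarrow> a \<le> K \<Longrightarrow> a * z \<le> K * max 0 (z::real)"
proof -
  assume "0 \<le> a" "a \<le> K"
  then have "a * z \<le> a * max 0 z" by (intro mult_left_mono) auto
  also have "\<dots> \<le> K * max 0 z" using \<open>a \<le> K\<close> by (intro mult_right_mono) auto
  finally show ?thesis .
qed

lemma hm2: "0 \<le> a \<Longrightarrow> a \<le> K \<Longrightarrow> 0 \<le> z \<Longrightarrow> a * z \<le> K * (z::real)"
  by (intro mult_right_mono) auto

lemma exp_mult_deriv:
  "(F has_real_derivative D) (at r) \<Longrightarrow> ((\<lambda>r. exp (c*r) * F r) has_real_derivative exp (c*r) * (c * F r + D)) (at r)"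
  by (auto intro!: derivative_eq_intros simp: algebra_simps)

lemma finite_pos_lb:
  fixes g :: "'a \<Rightarrow> real"
  assumes "finite S" "\<forall>j\<in>S. g j > 0"
  shows "\<exists>\<delta>>0. \<forall>j\<in>S. \<delta> \<le> g j"
  using assms
proof (induction S rule: finite_induct)
  case empty
  then show ?case by (intro exI[of _ 1]) auto
next
  case (insert x F)
  then obtain \<delta> where "\<delta> > 0" "\<forall>j\<in>F. \<delta> \<le> g j" by auto
  then show ?case using insert.prems by (intro exI[of _ "min \<delta> (g x)"]) auto
qed

locale lsys =
  fixes \<alpha> \<beta> :: real and f :: "real \<Rightarrow> real" and V P :: "int \<Rightarrow> real \<Rightarrow> real"
  assumes alpha_pos: "\<alpha> > 0" and beta_pos: "\<beta> > 0"
    and f: "kpp_nonlinearity f"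
    and V_cont: "\<forall>j. continuous_on {0..} (V j)"
    and P_cont: "\<forall>j. continuous_on {0..} (P j)"
    and V_ode: "\<forall>j t. t > 0 \<longrightarrow>
        (V j has_real_derivative (-2 * \<alpha> * V j t + \<beta> * (P j t + P (j + 1) t))) (at t)"
    and P_ode: "\<forall>j t. t > 0 \<longrightarrow>
        (P j has_real_derivative (f (P j t) + \<alpha> * (V j t + V (j - 1) t) - 2 * \<beta> * P j t)) (at t)"
    and bdd: "\<forall>T\<ge>0. \<exists>M. \<forall>j. \<forall>t\<in>{0..T}. \<bar>V j t\<bar> \<le> M \<and> \<bar>P j t\<bar> \<le> M"
    and V0nn: "\<forall>j. V j 0 \<ge> 0" and P0nn: "\<forall>j. P j 0 \<ge> 0"
begin

lemma Vc: "0 \<le> t0 \<Longrightarrow> continuous_on {t0..T} (V j)"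
  using V_cont by (meson atLeastAtMost_iff atLeast_iff continuous_on_subset subsetI order_trans)
lemma Pc: "0 \<le> t0 \<Longrightarrow> continuous_on {t0..T} (P j)"
  using P_cont by (meson atLeastAtMost_iff atLeast_iff continuous_on_subset subsetI order_trans)

lemma bddT: "0 \<le> T \<Longrightarrow> \<exists>M. \<forall>j t. t\<in>{0..T} \<longrightarrow> \<bar>V j t\<bar> \<le> M \<and> \<bar>P j t\<bar> \<le> M"
  using bdd by blast

lemmas ff = kpp_facts[OF f]

lemma Vd: "0 < t \<Longrightarrow> (V j has_real_derivative (-2 * \<alpha> * V j t + \<beta> * (P j t + P (j + 1) t))) (at t)"
  using V_ode by blast
lemma Pd: "0 < t \<Longrightarrow> (P j has_real_derivative (f (P j t) + \<alpha> * (V j t + V (j - 1) t) - 2 * \<beta> * P j t)) (at t)"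
  using P_ode by blast

lemma nonneg:
  assumes t: "0 \<le> t"
  shows "0 \<le> V k t \<and> 0 \<le> P k t"
proof -
  obtain M where M: "\<forall>j s. s\<in>{0..t} \<longrightarrow> \<bar>V j s\<bar> \<le> M \<and> \<bar>P j s\<bar> \<le> M" using bddT[OF t] by blast
  obtain L where L: "L \<ge> 0" "\<forall>x y. \<bar>x\<bar> \<le> M \<longrightarrow> \<bar>y\<bar> \<le> M \<longrightarrow> \<bar>f x - f y\<bar> \<le> L * \<bar>x - y\<bar>"
    using ff(5) by blast
  define K where "K = \<alpha> + \<beta> + L"
  have K: "0 \<le> K" "\<alpha> \<le> K" "\<beta> \<le> K" "L \<le> K" unfolding K_def using alpha_pos beta_pos L by auto
  have "(\<lambda>j s. - V j s) k t \<le> 0 \<and> (\<lambda>j s. - P j s) k t \<le> 0"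
  proof (rule comparison[where K=K and R=M and ta=0 and T=t and tb=t])
    show "0 \<le> K" by fact
    show "continuous_on {0..t} (\<lambda>s. - V j s)" for j by (intro continuous_intros Vc) auto
    show "continuous_on {0..t} (\<lambda>s. - P j s)" for j by (intro continuous_intros Pc) auto
    show "- V j s \<le> M \<and> - P j s \<le> M" if "s \<in> {0..t}" for j s
    proof -
      have "\<bar>V j s\<bar> \<le> M \<and> \<bar>P j s\<bar> \<le> M" using M that by blast
      then show ?thesis by linarith
    qed
    show "- V j 0 \<le> 0 \<and> - P j 0 \<le> 0" for j using V0nn P0nn by auto
    show "t \<in> {0..t}" using t by auto
  next
    fix j s assume s: "0 < s" "s \<le> t" "0 < - V j s"
    have D: "((\<lambda>s. - V j s) has_real_derivative - (-2 * \<alpha> * V j s + \<beta> * (P j s + P (j + 1) s))) (at s)"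
      using DERIV_minus[OF Vd[OF s(1)]] .
    have e: "- (-2 * \<alpha> * V j s + \<beta> * (P j s + P (j + 1) s)) = -2*(\<alpha>*(-V j s)) + \<beta>*(-P j s) + \<beta>*(-P (j+1) s)"
      by (simp add: algebra_simps)
    have "\<beta>*(-P j s) \<le> K * max 0 (-P j s)" "\<beta>*(-P (j+1) s) \<le> K * max 0 (-P (j+1) s)"
      by (intro hm; use K beta_pos in auto)+
    moreover have "0 \<le> \<alpha>*(-V j s)" "0 \<le> K*(-V j s)" by (intro mult_nonneg_nonneg; use s alpha_pos K in auto)+
    moreover have "K * (- V j s + max 0 (- P j s) + max 0 (- P (j + 1) s)) = K * (- V j s) + K * max 0 (- P j s) + K * max 0 (- P (j + 1) s)"
      by (simp only: distrib_left)
    ultimately have "- (-2 * \<alpha> * V j s + \<beta> * (P j s + P (j + 1) s)) \<le> K * (- V j s + max 0 (- P j s) + max 0 (- P (j + 1) s))"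
      unfolding e by linarith
    then show "\<exists>D. ((\<lambda>s. - V j s) has_real_derivative D) (at s) \<and>
        D \<le> K * (- V j s + max 0 (- P j s) + max 0 (- P (j + 1) s))"
      using D by blast
  next
    fix j s assume s: "0 < s" "s \<le> t" "0 < - P j s"
    have D: "((\<lambda>s. - P j s) has_real_derivative - (f (P j s) + \<alpha> * (V j s + V (j - 1) s) - 2 * \<beta> * P j s)) (at s)"
      using DERIV_minus[OF Pd[OF s(1)]] .
    have e: "- (f (P j s) + \<alpha> * (V j s + V (j - 1) s) - 2 * \<beta> * P j s) = (f 0 - f (P j s)) + \<alpha>*(-V j s) + \<alpha>*(-V (j-1) s) + 2*(\<beta>*P j s)"
      using ff(1) by (simp add: algebra_simps)
    have "\<bar>P j s\<bar> \<le> M" using M[rule_format, of s j] s by auto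
    moreover have "\<bar>0::real\<bar> \<le> M" using calculation by linarith
    ultimately have "\<bar>f 0 - f (P j s)\<bar> \<le> L * \<bar>0 - P j s\<bar>" using L by blast
    then have "f 0 - f (P j s) \<le> L * (- P j s)" using s by auto
    moreover have "L * (- P j s) \<le> K * (- P j s)" by (intro hm2; use L K s in auto)
    moreover have "\<alpha>*(-V j s) \<le> K * max 0 (-V j s)" "\<alpha>*(-V (j-1) s) \<le> K * max 0 (-V (j-1) s)"
      by (intro hm; use K alpha_pos in auto)+
    moreover have "\<beta>*P j s \<le> 0" using beta_pos s by (intro mult_nonneg_nonpos) auto
    moreover have "0 \<le> K*(-P j s)" by (intro mult_nonneg_nonneg; use s K in auto)
    moreover have "K * (- P j s + max 0 (- V j s) + max 0 (- V (j - 1) s)) = K * (- P j s) + K * max 0 (- V j s) + K * max 0 (- V (j - 1) s)"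
      by (simp only: distrib_left)
    ultimately have "- (f (P j s) + \<alpha> * (V j s + V (j - 1) s) - 2 * \<beta> * P j s) \<le> K * (- P j s + max 0 (- V j s) + max 0 (- V (j - 1) s))"
      unfolding e by linarith
    then show "\<exists>D. ((\<lambda>s. - P j s) has_real_derivative D) (at s) \<and>
        D \<le> K * (- P j s + max 0 (- V j s) + max 0 (- V (j - 1) s))"
      using D by blast
  qed
  then show ?thesis by auto
qed

lemma Mlip: "0 \<le> t \<Longrightarrow> \<exists>M L. 0 \<le> L \<and> (\<forall>j s. s \<in> {0..t} \<longrightarrow> \<bar>V j s\<bar> \<le> M \<and> \<bar>P j s\<bar> \<le> M) \<and>
    (\<forall>x y. \<bar>x\<bar> \<le> M \<longrightarrow> \<bar>y\<bar> \<le> M \<longrightarrow> \<bar>f x - f y\<bar> \<le> L * \<bar>x - y\<bar>)"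
proof -
  assume t: "0 \<le> t"
  obtain M where M: "\<forall>j s. s\<in>{0..t} \<longrightarrow> \<bar>V j s\<bar> \<le> M \<and> \<bar>P j s\<bar> \<le> M" using bddT[OF t] by blast
  obtain L where L: "L \<ge> 0" "\<forall>x y. \<bar>x\<bar> \<le> M \<longrightarrow> \<bar>y\<bar> \<le> M \<longrightarrow> \<bar>f x - f y\<bar> \<le> L * \<bar>x - y\<bar>"
    using ff(5) by blast
  show ?thesis using M L by blast
qed

lemma V_self:
  assumes "0 \<le> s" "s \<le> t" "V j s > 0"
  shows "V j t > 0"
proof -
  define g where "g = (\<lambda>r. exp ((2*\<alpha>)*r) * V j r)"
  have "g s \<le> g t"
  proof (rule DERIV_nonneg_imp_increasing_open[OF assms(2)])
    fix r assume r: "s < r" "r < t"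
    have D: "(g has_real_derivative exp ((2*\<alpha>)*r) * ((2*\<alpha>) * V j r + (-2 * \<alpha> * V j r + \<beta> * (P j r + P (j + 1) r)))) (at r)"
      unfolding g_def using r assms by (intro exp_mult_deriv Vd) auto
    have "0 \<le> P j r" "0 \<le> P (j+1) r" using nonneg[of r] r assms by auto
    then have "0 \<le> \<beta> * (P j r + P (j + 1) r)" using beta_pos by simp
    then have "0 \<le> exp ((2*\<alpha>)*r) * ((2*\<alpha>) * V j r + (-2 * \<alpha> * V j r + \<beta> * (P j r + P (j + 1) r)))"
      by simp
    then show "\<exists>y. (g has_real_derivative y) (at r) \<and> 0 \<le> y" using D by blast
  next
    show "continuous_on {s..t} g" unfolding g_def by (intro continuous_intros Vc assms(1))
  qed
  moreover have "0 < g s" unfolding g_def using assms(3) by simp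
  ultimately have "0 < g t" by linarith
  then show ?thesis unfolding g_def by (simp add: zero_less_mult_iff)
qed

lemma P_der:
  assumes r: "0 < r" "r \<le> t" and L: "0 \<le> L" "\<forall>x y. \<bar>x\<bar> \<le> M \<longrightarrow> \<bar>y\<bar> \<le> M \<longrightarrow> \<bar>f x - f y\<bar> \<le> L * \<bar>x - y\<bar>"
    and M: "\<forall>j s. s \<in> {0..t} \<longrightarrow> \<bar>V j s\<bar> \<le> M \<and> \<bar>P j s\<bar> \<le> M"
  shows "\<exists>D. ((\<lambda>r. exp ((L+2*\<beta>)*r) * P j r) has_real_derivative D) (at r) \<and> exp ((L+2*\<beta>)*r) * (\<alpha> * (V j r + V (j-1) r)) \<le> D"
proof -
  have D: "((\<lambda>r. exp ((L+2*\<beta>)*r) * P j r) has_real_derivative exp ((L+2*\<beta>)*r) * ((L+2*\<beta>) * P j r + (f (P j r) + \<alpha> * (V j r + V (j - 1) r) - 2 * \<beta> * P j r))) (at r)"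
    using r by (intro exp_mult_deriv Pd) auto
  have Pn: "0 \<le> P j r" using nonneg[of r] r by auto
  have "\<bar>P j r\<bar> \<le> M" using M[rule_format, of r j] r by auto
  moreover have "\<bar>0::real\<bar> \<le> M" using calculation by linarith
  ultimately have "\<bar>f 0 - f (P j r)\<bar> \<le> L * \<bar>0 - P j r\<bar>" using L by blast
  then have "0 \<le> L * P j r + f (P j r)" using Pn ff(1) by auto
  then have "\<alpha> * (V j r + V (j-1) r) \<le> (L+2*\<beta>) * P j r + (f (P j r) + \<alpha> * (V j r + V (j - 1) r) - 2 * \<beta> * P j r)"
    by (simp add: algebra_simps)
  then have "exp ((L+2*\<beta>)*r) * (\<alpha> * (V j r + V (j-1) r)) \<le> exp ((L+2*\<beta>)*r) * ((L+2*\<beta>) * P j r + (f (P j r) + \<alpha> * (V j r + V (j - 1) r) - 2 * \<beta> * P j r))"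
    by (intro mult_left_mono) auto
  then show ?thesis using D by blast
qed

lemma P_self:
  assumes "0 \<le> s" "s \<le> t" "P j s > 0"
  shows "P j t > 0"
proof -
  obtain M L where HML: "0 \<le> L" "\<forall>j s. s \<in> {0..t} \<longrightarrow> \<bar>V j s\<bar> \<le> M \<and> \<bar>P j s\<bar> \<le> M"
    "\<forall>x y. \<bar>x\<bar> \<le> M \<longrightarrow> \<bar>y\<bar> \<le> M \<longrightarrow> \<bar>f x - f y\<bar> \<le> L * \<bar>x - y\<bar>"
    using Mlip[of t] assms by auto
  define g where "g = (\<lambda>r. exp ((L+2*\<beta>)*r) * P j r)"
  have "g s \<le> g t"
  proof (rule DERIV_nonneg_imp_increasing_open[OF assms(2)])
    fix r assume r: "s < r" "r < t"
    obtain D where D: "(g has_real_derivative D) (at r)" "exp ((L+2*\<beta>)*r) * (\<alpha> * (V j r + V (j-1) r)) \<le> D"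
      using P_der[of r t L M j] HML r assms unfolding g_def by auto
    have "0 \<le> V j r" "0 \<le> V (j-1) r" using nonneg[of r] r assms by auto
    then have "0 \<le> exp ((L+2*\<beta>)*r) * (\<alpha> * (V j r + V (j-1) r))" using alpha_pos by simp
    then show "\<exists>y. (g has_real_derivative y) (at r) \<and> 0 \<le> y" using D by (intro exI[of _ D]) auto
  next
    show "continuous_on {s..t} g" unfolding g_def by (intro continuous_intros Pc assms(1))
  qed
  moreover have "0 < g s" unfolding g_def using assms(3) by simp
  ultimately have "0 < g t" by linarith
  then show ?thesis unfolding g_def by (simp add: zero_less_mult_iff)
qed

lemma V_from_P:
  assumes "0 \<le> s" "s < t" "P j s > 0 \<or> P (j+1) s > 0"
  shows "V j t > 0"
proof -
  define g where "g = (\<lambda>r. exp ((2*\<alpha>)*r) * V j r)"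
  have "g s < g t"
  proof (rule DERIV_pos_imp_increasing_open[OF assms(2)])
    fix r assume r: "s < r" "r < t"
    have D: "(g has_real_derivative exp ((2*\<alpha>)*r) * ((2*\<alpha>) * V j r + (-2 * \<alpha> * V j r + \<beta> * (P j r + P (j + 1) r)))) (at r)"
      unfolding g_def using r assms by (intro exp_mult_deriv Vd) auto
    have "0 \<le> P j r" "0 \<le> P (j+1) r" using nonneg[of r] r assms by auto
    moreover have "P j r > 0 \<or> P (j+1) r > 0" using assms(3) P_self[of s r] assms r by auto
    ultimately have "0 < \<beta> * (P j r + P (j + 1) r)" using beta_pos by (intro mult_pos_pos) auto
    then have "0 < exp ((2*\<alpha>)*r) * ((2*\<alpha>) * V j r + (-2 * \<alpha> * V j r + \<beta> * (P j r + P (j + 1) r)))"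
      by simp
    then show "\<exists>y. (g has_real_derivative y) (at r) \<and> 0 < y" using D by blast
  next
    show "continuous_on {s..t} g" unfolding g_def by (intro continuous_intros Vc assms(1))
  qed
  moreover have "0 \<le> g s" unfolding g_def using nonneg[of s] assms by simp
  ultimately have "0 < g t" by linarith
  then show ?thesis unfolding g_def by (simp add: zero_less_mult_iff)
qed

lemma P_from_V:
  assumes "0 \<le> s" "s < t" "V j s > 0 \<or> V (j-1) s > 0"
  shows "P j t > 0"
proof -
  obtain M L where HML: "0 \<le> L" "\<forall>j s. s \<in> {0..t} \<longrightarrow> \<bar>V j s\<bar> \<le> M \<and> \<bar>P j s\<bar> \<le> M"
    "\<forall>x y. \<bar>x\<bar> \<le> M \<longrightarrow> \<bar>y\<bar> \<le> M \<longrightarrow> \<bar>f x - f y\<bar> \<le> L * \<bar>x - y\<bar>"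
    using Mlip[of t] assms by auto
  define g where "g = (\<lambda>r. exp ((L+2*\<beta>)*r) * P j r)"
  have "g s < g t"
  proof (rule DERIV_pos_imp_increasing_open[OF assms(2)])
    fix r assume r: "s < r" "r < t"
    obtain D where D: "(g has_real_derivative D) (at r)" "exp ((L+2*\<beta>)*r) * (\<alpha> * (V j r + V (j-1) r)) \<le> D"
      using P_der[of r t L M j] HML r assms unfolding g_def by auto
    have "0 \<le> V j r" "0 \<le> V (j-1) r" using nonneg[of r] r assms by auto
    moreover have "V j r > 0 \<or> V (j-1) r > 0" using assms(3) V_self[of s r] assms r by auto
    ultimately have "0 < \<alpha> * (V j r + V (j-1) r)" using alpha_pos by (intro mult_pos_pos) auto
    then have "0 < exp ((L+2*\<beta>)*r) * (\<alpha> * (V j r + V (j-1) r))" by simp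
    then show "\<exists>y. (g has_real_derivative y) (at r) \<and> 0 < y" using D by (intro exI[of _ D]) auto
  next
    show "continuous_on {s..t} g" unfolding g_def by (intro continuous_intros Pc assms(1))
  qed
  moreover have "0 \<le> g s" unfolding g_def using nonneg[of s] assms by simp
  ultimately have "0 < g t" by linarith
  then show ?thesis unfolding g_def by (simp add: zero_less_mult_iff)
qed

lemma pos_all:
  assumes "\<exists>j0. V j0 0 > 0 \<or> P j0 0 > 0" and t: "t > 0"
  shows "V k t > 0 \<and> P k t > 0"
proof -
  obtain i where i: "\<forall>t>0. V i t > 0 \<and> P i t > 0"
  proof -
    obtain j0 where j0: "V j0 0 > 0 \<or> P j0 0 > 0" using assms(1) by blast
    show ?thesis
    proof (cases "P j0 0 > 0")
      case True
      have "\<forall>t>0. V j0 t > 0 \<and> P j0 t > 0" using True P_self[of 0 _ j0] V_from_P[of 0 _ j0] by auto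
      then show ?thesis using that by blast
    next
      case False
      then have V0: "V j0 0 > 0" using j0 by auto
      have Pp: "P (j0+1) t > 0" if "t > 0" for t using P_from_V[of 0 t "j0+1"] V0 that by auto
      have "V (j0+1) t > 0" if "t > 0" for t using V_from_P[of "t/2" t "j0+1"] Pp[of "t/2"] that by auto
      then show ?thesis using that Pp by blast
    qed
  qed
  have ind: "\<forall>j. \<bar>j - i\<bar> \<le> int n \<longrightarrow> (\<forall>t>0. V j t > 0 \<and> P j t > 0)" for n
  proof (induction n)
    case 0
    then show ?case using i by auto
  next
    case (Suc n)
    show ?case
    proof (intro allI impI)
      fix j :: int and t :: real
      assume j: "\<bar>j - i\<bar> \<le> int (Suc n)" and t: "0 < t"
      show "V j t > 0 \<and> P j t > 0"
      proof (cases "\<bar>j - i\<bar> \<le> int n")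
        case True
        then show ?thesis using Suc.IH t by blast
      next
        case False
        then have "\<bar>(j-1) - i\<bar> \<le> int n \<or> \<bar>(j+1) - i\<bar> \<le> int n" using j by auto
        then show ?thesis
        proof
          assume "\<bar>(j-1) - i\<bar> \<le> int n"
          then have IH: "\<forall>t>0. V (j-1) t > 0 \<and> P (j-1) t > 0" using Suc.IH by blast
          have Pp: "P j r > 0" if "r > 0" for r using P_from_V[of "r/2" r j] IH that by auto
          have "V j t > 0" using V_from_P[of "t/2" t j] Pp[of "t/2"] t by auto
          then show ?thesis using Pp t by auto
        next
          assume "\<bar>(j+1) - i\<bar> \<le> int n"
          then have IH: "\<forall>t>0. V (j+1) t > 0 \<and> P (j+1) t > 0" using Suc.IH by blast
          have Vp: "V j r > 0" if "r > 0" for r using V_from_P[of "r/2" r j] IH that by auto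
          have "P j t > 0" using P_from_V[of "t/2" t j] Vp[of "t/2"] t by auto
          then show ?thesis using Vp t by auto
        qed
      qed
    qed
  qed
  show ?thesis using ind[of "nat \<bar>k - i\<bar>"] t by auto
qed

lemma upper:
  assumes eta: "\<eta> > 0"
  shows "\<exists>T. \<forall>t\<ge>T. \<forall>j. V j t \<le> \<beta>/\<alpha>*(1+2*\<eta>) \<and> P j t \<le> 1+\<eta>"
proof -
  obtain M0 where M0: "\<forall>j s. s\<in>{0..0} \<longrightarrow> \<bar>V j s\<bar> \<le> M0 \<and> \<bar>P j s\<bar> \<le> M0" using bddT[of 0] by auto
  define \<rho> where "\<rho> = \<beta>/\<alpha>"
  have \<rho>pos: "\<rho> > 0" unfolding \<rho>_def using alpha_pos beta_pos by simp
  have \<beta>eq: "\<beta> = \<alpha> * \<rho>" unfolding \<rho>_def using alpha_pos by simp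
  define K0 where "K0 = max (1+\<eta>) (max M0 (M0/\<rho>))"
  define b1 where "b1 = 1 + \<eta>/2"
  have b1K0: "b1 < K0" "1 < b1" unfolding b1_def K0_def using eta by auto
  obtain u0 where u0: "u0 \<in> {b1..K0}" "\<forall>u\<in>{b1..K0}. f u \<le> f u0"
    using continuous_attains_sup[of "{b1..K0}" f] kpp_cont[OF f] b1K0 by auto
  define m where "m = - f u0"
  have mpos: "m > 0" unfolding m_def using ff(3)[of u0] u0(1) b1K0 by auto
  have fm: "\<forall>u\<in>{b1..K0}. f u \<le> -m" unfolding m_def using u0(2) by auto
  define c where "c = min (m/(1+\<rho>)) (\<alpha>*\<eta>)"
  have cpos: "c > 0" unfolding c_def using mpos \<rho>pos alpha_pos eta by auto
  have cm: "c + \<rho>*c \<le> m"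
  proof -
    have "c \<le> m/(1+\<rho>)" unfolding c_def by auto
    then have "c * (1+\<rho>) \<le> m" using \<rho>pos by (simp add: field_simps)
    then show ?thesis by (simp add: algebra_simps)
  qed
  have ce: "c \<le> \<alpha>*\<eta>" unfolding c_def by auto
  define e where "e = \<rho>*c/(2*\<alpha>)"
  have e2: "\<rho> * c = 2*\<alpha>*e" unfolding e_def using alpha_pos by simp
  have epos: "e \<ge> 0" unfolding e_def using \<rho>pos cpos alpha_pos by simp
  have ele: "e \<le> \<rho>*\<eta>/2"
  proof -
    have "\<rho> * c \<le> \<rho> * (\<alpha>*\<eta>)" using ce \<rho>pos by (intro mult_left_mono) auto
    then show ?thesis unfolding e_def using alpha_pos by (simp add: field_simps)
  qed
  define lam where "lam = c/(K0-b1)"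
  have lampos: "lam > 0" unfolding lam_def using cpos b1K0 by simp
  have lamc: "(K0-b1)*lam = c" unfolding lam_def using b1K0 by simp
  define B where "B = (\<lambda>t. b1 + (K0-b1)*exp(-lam*t))"
  define B' where "B' = (\<lambda>t. -c*exp(-lam*t))"
  have Bd: "(B has_real_derivative B' t) (at t)" for t
  proof -
    have "(B has_real_derivative 0 + (K0-b1)*(exp(-lam*t) * (-lam))) (at t)"
      unfolding B_def by (intro DERIV_add DERIV_const DERIV_cmult DERIV_fun_exp) (auto intro!: derivative_eq_intros)
    moreover have "0 + (K0-b1)*(exp(-lam*t) * (-lam)) = B' t" unfolding B'_def using lamc
      by (metis add_0 mult.commute mult.left_commute mult_minus_left mult_minus_right)
    ultimately show ?thesis by simp
  qed
  have expb: "0 < exp(-lam*t)" "t \<ge> 0 \<Longrightarrow> exp(-lam*t) \<le> 1" for t using lampos by auto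
  have Bge: "b1 \<le> B t" for t unfolding B_def using expb b1K0 by simp
  have Ble: "t \<ge> 0 \<Longrightarrow> B t \<le> K0" for t
  proof -
    assume "t \<ge> 0"
    then have "(K0-b1)*exp(-lam*t) \<le> (K0-b1)*1" using b1K0 expb by (intro mult_left_mono) auto
    then show ?thesis unfolding B_def by simp
  qed
  have B'b: "- B' t \<le> c" "0 \<le> - B' t" if "t \<ge> 0" for t
  proof -
    have "c*exp(-lam*t) \<le> c*1" using cpos expb that by (intro mult_left_mono) auto
    then show "- B' t \<le> c" unfolding B'_def by simp
    show "0 \<le> - B' t" unfolding B'_def using cpos by simp
  qed
  define A where "A = (\<lambda>t. \<rho>*B t + e)"
  have Ad: "(A has_real_derivative \<rho> * B' t + 0) (at t)" for t
    unfolding A_def by (intro DERIV_add DERIV_cmult Bd DERIV_const)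
  have Ac: "continuous_on S A" for S using DERIV_isCont[OF Ad] by (intro continuous_at_imp_continuous_on) auto
  have Bc: "continuous_on S B" for S using DERIV_isCont[OF Bd] by (intro continuous_at_imp_continuous_on) auto
  have main: "V k t \<le> A t \<and> P k t \<le> B t" if t: "0 \<le> t" for k t
  proof -
    obtain M where HM: "\<forall>j s. s \<in> {0..t} \<longrightarrow> \<bar>V j s\<bar> \<le> M \<and> \<bar>P j s\<bar> \<le> M"
      using bddT[OF t] by blast
    define R where "R = max M K0"
    obtain L' where L': "L' \<ge> 0" "\<forall>x y. \<bar>x\<bar> \<le> R \<longrightarrow> \<bar>y\<bar> \<le> R \<longrightarrow> \<bar>f x - f y\<bar> \<le> L' * \<bar>x - y\<bar>"
      using ff(5) by blast
    define K where "K = \<alpha> + \<beta> + L'"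
    have K: "0 \<le> K" "\<alpha> \<le> K" "\<beta> \<le> K" "L' \<le> K" unfolding K_def using alpha_pos beta_pos L' by auto
    have Ms: "\<bar>V j s\<bar> \<le> M \<and> \<bar>P j s\<bar> \<le> M" if "0 \<le> s" "s \<le> t" for j s using HM that by auto
    have "(\<lambda>j s. V j s - A s) k t \<le> 0 \<and> (\<lambda>j s. P j s - B s) k t \<le> 0"
    proof (rule comparison[where K=K and R=M and ta=0 and T=t and tb=t])
      show "0 \<le> K" by fact
      show "continuous_on {0..t} (\<lambda>s. V j s - A s)" for j
        by (intro continuous_intros Vc Ac) auto
      show "continuous_on {0..t} (\<lambda>s. P j s - B s)" for j
        by (intro continuous_intros Pc Bc) auto
      show "V j s - A s \<le> M \<and> P j s - B s \<le> M" if "s \<in> {0..t}" for j s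
      proof -
        have "0 \<le> A s" "0 \<le> B s" unfolding A_def using Bge[of s] b1K0 \<rho>pos epos by auto
        then show ?thesis using Ms[of s j] that by auto
      qed
      show "V j 0 - A 0 \<le> 0 \<and> P j 0 - B 0 \<le> 0" for j
      proof -
        have "\<bar>V j 0\<bar> \<le> M0 \<and> \<bar>P j 0\<bar> \<le> M0" using M0 by auto
        then have "V j 0 \<le> M0" "P j 0 \<le> M0" by linarith+
        moreover have "M0 \<le> \<rho> * K0"
        proof -
          have "M0/\<rho> \<le> K0" unfolding K0_def by auto
          then show ?thesis using \<rho>pos by (simp add: field_simps)
        qed
        moreover have "M0 \<le> K0" unfolding K0_def by auto
        ultimately show ?thesis unfolding A_def B_def using epos by simp
      qed
      show "t \<in> {0..t}" using t by auto
    next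
      fix j s assume s: "0 < s" "s \<le> t" "0 < V j s - A s"
      define X where "X = V j s - A s"
      define Y1 where "Y1 = P j s - B s"
      define Y2 where "Y2 = P (j+1) s - B s"
      define D where "D = (-2 * \<alpha> * V j s + \<beta> * (P j s + P (j + 1) s)) - (\<rho> * B' s + 0)"
      have Dd: "((\<lambda>s. V j s - A s) has_real_derivative D) (at s)"
        unfolding D_def using s by (intro DERIV_diff Vd Ad) auto
      have eq: "D = -2*(\<alpha>*X) + \<beta>*Y1 + \<beta>*Y2 + (\<rho>*(-B' s) - 2*\<alpha>*e)"
        unfolding D_def X_def Y1_def Y2_def A_def \<beta>eq by (simp add: algebra_simps)
      have "\<rho>*(-B' s) \<le> \<rho>*c" using B'b[of s] s \<rho>pos by (intro mult_left_mono) auto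
      moreover have "\<beta>*Y1 \<le> K * max 0 Y1" "\<beta>*Y2 \<le> K * max 0 Y2" by (intro hm; use K beta_pos in auto)+
      moreover have "0 \<le> \<alpha>*X" "0 \<le> K*X" using s K alpha_pos unfolding X_def by auto
      moreover have "K * (X + max 0 Y1 + max 0 Y2) = K*X + K*max 0 Y1 + K * max 0 Y2" by (simp only: distrib_left)
      ultimately have "D \<le> K * (X + max 0 Y1 + max 0 Y2)" using eq e2 by linarith
      then show "\<exists>D. ((\<lambda>s. V j s - A s) has_real_derivative D) (at s) \<and>
         D \<le> K * (V j s - A s + max 0 (P j s - B s) + max 0 (P (j + 1) s - B s))"
        using Dd unfolding X_def Y1_def Y2_def by blast
    next
      fix j s assume s: "0 < s" "s \<le> t" "0 < P j s - B s"
      define X1 where "X1 = V j s - A s"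
      define X0 where "X0 = V (j-1) s - A s"
      define Y where "Y = P j s - B s"
      define D where "D = (f (P j s) + \<alpha> * (V j s + V (j - 1) s) - 2 * \<beta> * P j s) - B' s"
      have Dd: "((\<lambda>s. P j s - B s) has_real_derivative D) (at s)"
        unfolding D_def using s by (intro DERIV_diff Pd Bd) auto
      have eq: "D = f (P j s) + \<alpha>*X1 + \<alpha>*X0 + 2*\<alpha>*e - 2*(\<beta>*Y) - B' s"
        unfolding D_def X1_def X0_def Y_def A_def \<beta>eq by (simp add: algebra_simps)
      have "\<bar>P j s\<bar> \<le> R" "\<bar>B s\<bar> \<le> R" using Ms[of s j] s Bge[of s] Ble[of s] b1K0 unfolding R_def by auto
      then have "\<bar>f (P j s) - f (B s)\<bar> \<le> L' * \<bar>P j s - B s\<bar>" using L' by blast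
      then have "f (P j s) \<le> f (B s) + L' * Y" using s unfolding Y_def by auto
      moreover have "f (B s) \<le> -m" using fm Bge[of s] Ble[of s] s by auto
      moreover have "L' * Y \<le> K * Y" by (intro hm2; use K L' s Y_def in auto)
      moreover have "\<alpha>*X1 \<le> K * max 0 X1" "\<alpha>*X0 \<le> K * max 0 X0" by (intro hm; use K alpha_pos in auto)+
      moreover have "0 \<le> \<beta>*Y" using s beta_pos unfolding Y_def by auto
      moreover have "K * (Y + max 0 X1 + max 0 X0) = K*Y + K*max 0 X1 + K * max 0 X0" by (simp only: distrib_left)
      moreover have "- B' s \<le> c" using B'b[of s] s by auto
      ultimately have "D \<le> K * (Y + max 0 X1 + max 0 X0)" using eq e2 cm by linarith
      then show "\<exists>D. ((\<lambda>s. P j s - B s) has_real_derivative D) (at s) \<and>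
         D \<le> K * (P j s - B s + max 0 (V j s - A s) + max 0 (V (j - 1) s - A s))"
        using Dd unfolding X1_def X0_def Y_def by blast
    qed
    then show ?thesis by auto
  qed
  define T where "T = 2*(K0-b1)/(lam*\<eta>) + 1"
  show ?thesis
  proof (intro exI[of _ T] allI impI)
    fix t j assume tT: "T \<le> t"
    have "0 < 2*(K0-b1)/(lam*\<eta>)" using b1K0 lampos eta by (intro divide_pos_pos mult_pos_pos) auto
    then have Tpos: "0 < T" unfolding T_def by linarith
    have t0: "0 \<le> t" using tT Tpos by auto
    have "2*(K0-b1)/(lam*\<eta>) \<le> t" using tT unfolding T_def by simp
    then have "lam * (2*(K0-b1)/(lam*\<eta>)) \<le> lam * t" using lampos by (intro mult_left_mono) auto
    moreover have "lam * (2*(K0-b1)/(lam*\<eta>)) = 2*(K0-b1)/\<eta>" using lampos eta by (simp add: field_simps)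
    ultimately have "2*(K0-b1)/\<eta> \<le> lam * t" by linarith
    also have "\<dots> \<le> exp (lam * t)" using exp_ge_add_one_self[of "lam*t"] by linarith
    finally have ex: "2*(K0-b1)/\<eta> \<le> exp (lam * t)" .
    have "(K0-b1)*exp(-lam*t) = (K0-b1)/exp(lam*t)" by (simp add: exp_minus field_simps)
    also have "\<dots> \<le> (K0-b1)/(2*(K0-b1)/\<eta>)" using ex b1K0 eta by (intro divide_left_mono) auto
    also have "\<dots> = \<eta>/2" using b1K0 eta by (simp add: field_simps)
    finally have "(K0-b1)*exp(-lam*t) \<le> \<eta>/2" .
    then have Bt: "B t \<le> 1 + \<eta>" unfolding B_def b1_def by simp
    have "\<rho> * B t \<le> \<rho> * (1+\<eta>)" using Bt \<rho>pos by (intro mult_left_mono) auto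
    then have "A t \<le> \<rho>*(1+\<eta>) + \<rho>*\<eta>/2" unfolding A_def using ele by linarith
    also have "\<dots> \<le> \<rho>*(1+2*\<eta>)" using mult_pos_pos[OF \<rho>pos eta] by (simp add: algebra_simps)
    finally have "A t \<le> \<rho>*(1+2*\<eta>)" .
    then show "V j t \<le> \<beta>/\<alpha>*(1+2*\<eta>) \<and> P j t \<le> 1+\<eta>" using main[OF t0, of j] Bt unfolding \<rho>_def by auto
  qed
qed

end

context lsys begin

lemma lower:
  assumes pos: "\<And>j t. t > 0 \<Longrightarrow> V j t > 0 \<and> P j t > 0" and eta: "0 < \<eta>" "\<eta> \<le> 1/2"
  shows "\<exists>T. \<forall>t\<ge>T. \<forall>j. \<bar>j\<bar> \<le> J \<longrightarrow> \<beta>/\<alpha>*(1-\<eta>)^5 \<le> V j t \<and> (1-\<eta>)^3 \<le> P j t"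
proof -
  obtain r0 where r0: "r0 > 0" "\<forall>u. 0 < u \<and> u \<le> 1 - \<eta> \<longrightarrow> r0 * u \<le> f u"
    using kpp_lin_lower[OF f, of \<eta>] eta by auto
  define \<rho> where "\<rho> = \<beta>/\<alpha>"
  have \<rho>pos: "\<rho> > 0" unfolding \<rho>_def using alpha_pos beta_pos by simp
  have \<beta>eq: "\<beta> = \<alpha> * \<rho>" unfolding \<rho>_def using alpha_pos by simp
  define \<gamma> where "\<gamma> = min \<eta> (r0/(8*\<beta>))"
  have \<gamma>: "0 < \<gamma>" "\<gamma> \<le> \<eta>" "2*(\<beta>*\<gamma>) \<le> r0/4"
  proof -
    show "0 < \<gamma>" "\<gamma> \<le> \<eta>" unfolding \<gamma>_def using eta r0 beta_pos by auto
    have "\<gamma> \<le> r0/(8*\<beta>)" unfolding \<gamma>_def by auto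
    then show "2*(\<beta>*\<gamma>) \<le> r0/4" using beta_pos by (simp add: field_simps)
  qed
  define \<mu> where "\<mu> = min (r0/4) (\<alpha>*\<gamma>)"
  have \<mu>: "0 < \<mu>" "\<mu> \<le> r0/4" "\<mu> \<le> \<alpha>*\<gamma>" unfolding \<mu>_def using r0 alpha_pos \<gamma> by auto
  define \<delta>0 where "\<delta>0 = min 1 (min \<eta> (r0/(8*\<beta>)))"
  have \<delta>0: "0 < \<delta>0" "\<delta>0 \<le> 1" "\<delta>0 \<le> \<eta>" "2*(\<beta>*\<delta>0) \<le> r0/4"
  proof -
    show "0 < \<delta>0" "\<delta>0 \<le> 1" "\<delta>0 \<le> \<eta>" unfolding \<delta>0_def using eta r0 beta_pos by auto
    have "\<delta>0 \<le> r0/(8*\<beta>)" unfolding \<delta>0_def by auto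
    then show "2*(\<beta>*\<delta>0) \<le> r0/4" using beta_pos by (simp add: field_simps)
  qed
  define Jr where "Jr = real_of_int \<bar>J\<bar>"
  have Jr0: "0 \<le> Jr" unfolding Jr_def by simp
  define N :: int where "N = \<lceil>pi*(Jr+1)/\<delta>0\<rceil> + \<bar>J\<bar> + 1"
  have NJ: "\<bar>J\<bar> + 1 \<le> N"
  proof -
    have "0 \<le> pi*(Jr+1)/\<delta>0" using Jr0 \<delta>0 by simp
    then have "0 \<le> \<lceil>pi*(Jr+1)/\<delta>0\<rceil>" by linarith
    then show ?thesis unfolding N_def by linarith
  qed
  have Npi: "pi*(Jr+1)/\<delta>0 \<le> real_of_int N"
  proof -
    have "pi*(Jr+1)/\<delta>0 \<le> real_of_int \<lceil>pi*(Jr+1)/\<delta>0\<rceil>" by (rule le_of_int_ceiling)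
    moreover have "0 \<le> \<bar>real_of_int J\<bar> + 1" by simp
    moreover have "real_of_int N = real_of_int \<lceil>pi*(Jr+1)/\<delta>0\<rceil> + \<bar>real_of_int J\<bar> + 1" unfolding N_def by simp
    ultimately show ?thesis by linarith
  qed
  have Npos: "real_of_int N > 0" using NJ by simp
  define \<theta> where "\<theta> = pi/(2*real_of_int N)"
  have \<theta>pos: "\<theta> > 0" unfolding \<theta>_def using Npos by simp
  have \<theta>N: "\<theta> * real_of_int N = pi/2" unfolding \<theta>_def using Npos by simp
  have \<theta>J: "\<theta>*(Jr+1) \<le> \<delta>0"
  proof -
    have "pi*(Jr+1) \<le> \<delta>0 * real_of_int N" using Npi \<delta>0(1) by (simp add: field_simps)
    then have "pi*(Jr+1)/(2*real_of_int N) \<le> \<delta>0 * real_of_int N/(2*real_of_int N)"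
      using Npos by (intro divide_right_mono) auto
    also have "\<dots> = \<delta>0/2" using Npos by simp
    finally have "pi*(Jr+1)/(2*real_of_int N) \<le> \<delta>0/2" .
    moreover have "\<theta>*(Jr+1) = pi*(Jr+1)/(2*real_of_int N)" unfolding \<theta>_def by simp
    ultimately show ?thesis using \<delta>0 by linarith
  qed
  have \<theta>\<delta>: "\<theta> \<le> \<delta>0"
  proof -
    have "\<theta>*1 \<le> \<theta>*(Jr+1)" using Jr0 \<theta>pos by (intro mult_left_mono) auto
    then show ?thesis using \<theta>J by simp
  qed
  have cosb: "1 - \<eta> \<le> cos x" if "\<bar>x\<bar> \<le> \<delta>0" for x
  proof -
    have "x^2 = \<bar>x\<bar>^2" by simp
    also have "\<dots> \<le> \<delta>0^2" using that by (intro power_mono) auto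
    also have "\<dots> \<le> \<delta>0" using \<delta>0 by (simp add: power2_eq_square mult_le_one)
    finally have "x^2 \<le> \<eta>" using \<delta>0 by linarith
    then show ?thesis using cos_lb[of x] eta by linarith
  qed
  define c where "c = cos (\<theta>/2)"
  have c: "1 - \<eta> \<le> c" "c \<le> 1" "0 < c"
  proof -
    show "1 - \<eta> \<le> c" unfolding c_def using cosb[of "\<theta>/2"] \<theta>pos \<theta>\<delta> by auto
    show "c \<le> 1" unfolding c_def by simp
    then show "0 < c" using \<open>1 - \<eta> \<le> c\<close> eta by linarith
  qed
  have c2: "2*(\<beta>*(1 - c^2)) \<le> r0/4"
  proof -
    have "1 - c^2 = sin (\<theta>/2) ^2" unfolding c_def using sin_cos_squared_add[of "\<theta>/2"] by linarith
    also have "\<dots> = \<bar>sin (\<theta>/2)\<bar>^2" by simp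
    also have "\<dots> \<le> \<bar>\<theta>/2\<bar>^2" by (intro power_mono abs_sin_x_le_abs_x) auto
    also have "\<dots> \<le> \<delta>0^2" using \<theta>pos \<theta>\<delta> by (intro power_mono) auto
    also have "\<dots> \<le> \<delta>0" using \<delta>0 by (simp add: power2_eq_square mult_le_one)
    finally have "\<beta>*(1 - c^2) \<le> \<beta>*\<delta>0" using beta_pos by (intro mult_left_mono) auto
    then show ?thesis using \<delta>0 by linarith
  qed
  define a where "a = \<rho>*c*(1-\<gamma>)"
  have a: "0 < a" "\<alpha>*a = \<beta>*c*(1-\<gamma>)" "a \<le> \<rho>*c"
  proof -
    show "0 < a" unfolding a_def using \<rho>pos c \<gamma> eta by auto
    show "\<alpha>*a = \<beta>*c*(1-\<gamma>)" unfolding a_def \<beta>eq by simp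
    have "\<rho>*c*(1-\<gamma>) \<le> \<rho>*c*1" using \<rho>pos c \<gamma> by (intro mult_left_mono) auto
    then show "a \<le> \<rho>*c" unfolding a_def by simp
  qed
  define sP where "sP = (\<lambda>j::int. if \<bar>j\<bar> \<le> N then cos (\<theta>*real_of_int j) else 0)"
  define sV where "sV = (\<lambda>j::int. if -N \<le> j \<and> j \<le> N-1 then cos (\<theta>*(real_of_int j+1/2)) else 0)"
  have sP01: "0 \<le> sP j" "sP j \<le> 1" for j
  proof -
    show "sP j \<le> 1" unfolding sP_def by auto
    show "0 \<le> sP j"
    proof (cases "\<bar>j\<bar> \<le> N")
      case True
      then have "\<bar>real_of_int j\<bar> \<le> real_of_int N" by linarith
      then have "\<theta>*\<bar>real_of_int j\<bar> \<le> \<theta> * real_of_int N" using \<theta>pos by (intro mult_left_mono) auto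
      then have "\<bar>\<theta>*real_of_int j\<bar> \<le> pi/2" using \<theta>N \<theta>pos by (simp add: abs_mult)
      then have "0 \<le> cos (\<theta>*real_of_int j)" by (intro cos_ge_zero) auto
      then show ?thesis unfolding sP_def using True by simp
    qed (simp add: sP_def)
  qed
  have sV01: "0 \<le> sV j" "sV j \<le> 1" for j
  proof -
    show "sV j \<le> 1" unfolding sV_def by auto
    show "0 \<le> sV j"
    proof (cases "-N \<le> j \<and> j \<le> N-1")
      case True
      then have "\<bar>real_of_int j + 1/2\<bar> \<le> real_of_int N" by linarith
      then have "\<theta>*\<bar>real_of_int j+1/2\<bar> \<le> \<theta> * real_of_int N" using \<theta>pos by (intro mult_left_mono) auto
      then have "\<bar>\<theta>*(real_of_int j+1/2)\<bar> \<le> pi/2" using \<theta>N \<theta>pos by (simp add: abs_mult)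
      then have "0 \<le> cos (\<theta>*(real_of_int j+1/2))" by (intro cos_ge_zero) auto
      then show ?thesis unfolding sV_def using True by simp
    qed (auto simp: sV_def)
  qed
  have id1: "sP j + sP (j+1) = 2*c* sV j" if "sV j > 0" for j
  proof -
    have r: "-N \<le> j \<and> j \<le> N-1" using that unfolding sV_def by (auto split: if_splits)
    then have "sP j + sP (j+1) = cos (\<theta>*real_of_int j) + cos (\<theta>*real_of_int (j+1))" unfolding sP_def by auto
    also have "\<dots> = 2 * cos ((\<theta>*real_of_int j + \<theta>*real_of_int (j+1))/2) * cos ((\<theta>*real_of_int j - \<theta>*real_of_int (j+1))/2)"
      by (rule cos_plus_cos)
    also have "(\<theta>*real_of_int j + \<theta>*real_of_int (j+1))/2 = \<theta>*(real_of_int j+1/2)" by (simp add: algebra_simps)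
    also have "(\<theta>*real_of_int j - \<theta>*real_of_int (j+1))/2 = -(\<theta>/2)" by (simp add: algebra_simps)
    finally show ?thesis unfolding sV_def c_def using r by simp
  qed
  have id2: "sV j + sV (j-1) = 2*c* sP j" if "sP j > 0" for j
  proof -
    have r0': "\<bar>j\<bar> \<le> N" and cp: "cos (\<theta>*real_of_int j) > 0" using that unfolding sP_def by (auto split: if_splits)
    have "j \<noteq> N"
    proof
      assume "j = N" then have "cos (\<theta>*real_of_int j) = 0" by (simp only: \<theta>N cos_pi_half)
      then show False using cp by simp
    qed
    moreover have "j \<noteq> -N"
    proof
      assume "j = -N" then have "\<theta>*real_of_int j = -(\<theta>*real_of_int N)" by simp
      then have "cos (\<theta>*real_of_int j) = 0" by (simp only: \<theta>N cos_minus cos_pi_half)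
      then show False using cp by simp
    qed
    ultimately have r: "-N < j \<and> j < N" using r0' by auto
    then have "sV j + sV (j-1) = cos (\<theta>*(real_of_int j+1/2)) + cos (\<theta>*(real_of_int (j-1)+1/2))" unfolding sV_def by auto
    also have "\<dots> = 2 * cos ((\<theta>*(real_of_int j+1/2) + \<theta>*(real_of_int (j-1)+1/2))/2) * cos ((\<theta>*(real_of_int j+1/2) - \<theta>*(real_of_int (j-1)+1/2))/2)"
      by (rule cos_plus_cos)
    also have "(\<theta>*(real_of_int j+1/2) + \<theta>*(real_of_int (j-1)+1/2))/2 = \<theta>*real_of_int j" by (simp add: algebra_simps)
    also have "(\<theta>*(real_of_int j+1/2) - \<theta>*(real_of_int (j-1)+1/2))/2 = \<theta>/2" by (simp add: algebra_simps)
    finally show ?thesis unfolding sP_def c_def using r0' by (simp add: mult_ac)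
  qed
  have center: "1 - \<eta> \<le> sP j \<and> 1 - \<eta> \<le> sV j" if "\<bar>j\<bar> \<le> J" for j
  proof -
    have jN: "\<bar>j\<bar> \<le> N" "-N \<le> j \<and> j \<le> N-1" using that NJ by auto
    have jr: "\<bar>real_of_int j\<bar> \<le> Jr" unfolding Jr_def using that by linarith
    have "\<bar>\<theta>*real_of_int j\<bar> \<le> \<theta>*(Jr+1)" using jr \<theta>pos by (simp add: abs_mult mult_left_mono)
    then have 1: "1 - \<eta> \<le> cos (\<theta>*real_of_int j)" using cosb \<theta>J by auto
    have "\<bar>real_of_int j + 1/2\<bar> \<le> Jr + 1" using jr by linarith
    then have "\<bar>\<theta>*(real_of_int j+1/2)\<bar> \<le> \<theta>*(Jr+1)" using \<theta>pos by (simp add: abs_mult mult_left_mono)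
    then have 2: "1 - \<eta> \<le> cos (\<theta>*(real_of_int j+1/2))" using cosb \<theta>J by auto
    show ?thesis using 1 2 jN unfolding sP_def sV_def by simp
  qed
  define S where "S = {-N..N}"
  have "\<exists>\<delta>>0. \<forall>j\<in>S. \<delta> \<le> min (V j 1) (P j 1)"
    using finite_pos_lb[of S "\<lambda>j. min (V j 1) (P j 1)"] pos[of 1] unfolding S_def by auto
  then obtain \<delta> where \<delta>: "\<delta> > 0" "\<And>j. j \<in> S \<Longrightarrow> \<delta> \<le> V j 1 \<and> \<delta> \<le> P j 1" by auto
  define k1 where "k1 = 1 - \<eta>"
  have k1: "1/2 \<le> k1" "k1 < 1" unfolding k1_def using eta by auto
  define \<kappa>0 where "\<kappa>0 = min (k1/2) (\<delta>/(1+a))"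
  have \<kappa>0: "0 < \<kappa>0" "\<kappa>0 \<le> k1/2" "\<kappa>0*(1+a) \<le> \<delta>"
  proof -
    show "0 < \<kappa>0" unfolding \<kappa>0_def using k1 \<delta> a by auto
    show "\<kappa>0 \<le> k1/2" unfolding \<kappa>0_def by (rule min.cobounded1)
    have "\<kappa>0 \<le> \<delta>/(1+a)" unfolding \<kappa>0_def by auto
    then show "\<kappa>0*(1+a) \<le> \<delta>" using a by (simp add: field_simps)
  qed
  have init: "\<kappa>0*a * sV j \<le> V j 1 \<and> \<kappa>0 * sP j \<le> P j 1" for j
  proof (cases "j \<in> S")
    case True
    have "\<kappa>0*a * sV j \<le> \<kappa>0*a*1" using \<kappa>0 a sV01[of j] by (intro mult_left_mono) auto
    moreover have "\<kappa>0 * sP j \<le> \<kappa>0*1" using \<kappa>0 sP01[of j] by (intro mult_left_mono) auto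
    moreover have "\<kappa>0*a + \<kappa>0 \<le> \<delta>" using \<kappa>0 by (simp add: algebra_simps)
    moreover have "0 \<le> \<kappa>0*a" using \<kappa>0 a by simp
    ultimately show ?thesis using \<delta>(2)[OF True] \<kappa>0 by linarith
  next
    case False
    then have "sV j = 0" "sP j = 0" unfolding S_def sV_def sP_def by auto
    then show ?thesis using pos[of 1 j] by simp
  qed
  define C where "C = k1/\<kappa>0 - 1"
  have C: "0 \<le> C"
  proof -
    have "\<kappa>0 \<le> k1" using \<kappa>0 k1 by linarith
    then have "1 \<le> k1/\<kappa>0" using \<kappa>0 by (simp add: field_simps)
    then show ?thesis unfolding C_def by simp
  qed
  define q where "q = (\<lambda>t. C * exp(-\<mu>*(t-1)))"
  define \<kappa> where "\<kappa> = (\<lambda>t. k1/(1 + q t))"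
  define \<kappa>' where "\<kappa>' = (\<lambda>t. \<mu>*k1*q t/(1+q t)^2)"
  have q0: "0 \<le> q t" for t unfolding q_def using C by simp
  have \<kappa>1: "\<kappa> 1 = \<kappa>0" unfolding \<kappa>_def q_def C_def using \<kappa>0 by simp
  have \<kappa>pos: "0 < \<kappa> t" for t unfolding \<kappa>_def using q0[of t] k1 by simp
  have \<kappa>le: "\<kappa> t \<le> k1" for t
  proof -
    have "k1/(1 + q t) \<le> k1/1" using q0[of t] k1 by (intro divide_left_mono) auto
    then show ?thesis unfolding \<kappa>_def by simp
  qed
  have \<kappa>d: "(\<kappa> has_real_derivative \<kappa>' t) (at t)" for t
  proof -
    have "1 + q t \<noteq> 0" using q0[of t] by simp
    then show ?thesis unfolding \<kappa>_def \<kappa>'_def q_def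
      by (auto intro!: derivative_eq_intros simp: field_simps power2_eq_square)
  qed
  have \<kappa>'le: "\<kappa>' t \<le> \<mu>*\<kappa> t" for t
  proof -
    have e: "\<kappa>' t = (\<mu>*\<kappa> t)*(q t/(1+q t))" unfolding \<kappa>'_def \<kappa>_def using q0[of t] by (simp add: field_simps power2_eq_square)
    have "q t/(1+q t) \<le> 1" using q0[of t] by simp
    then have "(\<mu>*\<kappa> t)*(q t/(1+q t)) \<le> (\<mu>*\<kappa> t)*1" using \<mu> \<kappa>pos[of t] by (intro mult_left_mono) auto
    then show ?thesis using e by simp
  qed
  have \<kappa>c: "continuous_on A \<kappa>" for A using DERIV_isCont[OF \<kappa>d] by (intro continuous_at_imp_continuous_on) auto
  have main: "\<kappa> t * a * sV k \<le> V k t \<and> \<kappa> t * sP k \<le> P k t" if t: "1 \<le> t" for k t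
  proof -
    obtain M where HM: "\<forall>j s. s \<in> {0..t} \<longrightarrow> \<bar>V j s\<bar> \<le> M \<and> \<bar>P j s\<bar> \<le> M"
      using bddT[of t] t by auto
    define R where "R = max M 1"
    obtain L' where L': "L' \<ge> 0" "\<forall>x y. \<bar>x\<bar> \<le> R \<longrightarrow> \<bar>y\<bar> \<le> R \<longrightarrow> \<bar>f x - f y\<bar> \<le> L' * \<bar>x - y\<bar>"
      using ff(5) by blast
    define K where "K = \<alpha> + \<beta> + L'"
    have K: "0 \<le> K" "\<alpha> \<le> K" "\<beta> \<le> K" "L' \<le> K" unfolding K_def using alpha_pos beta_pos L' by auto
    have Ms: "\<bar>V j s\<bar> \<le> M \<and> \<bar>P j s\<bar> \<le> M" if "0 \<le> s" "s \<le> t" for j s using HM that by auto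
    have "(\<lambda>j s. \<kappa> s * a * sV j - V j s) k t \<le> 0 \<and> (\<lambda>j s. \<kappa> s * sP j - P j s) k t \<le> 0"
    proof (rule comparison[where K=K and R="a+1" and ta=1 and T=t and tb=t])
      show "0 \<le> K" by fact
      show "continuous_on {1..t} (\<lambda>s. \<kappa> s * a * sV j - V j s)" for j
        by (intro continuous_intros \<kappa>c Vc) auto
      show "continuous_on {1..t} (\<lambda>s. \<kappa> s * sP j - P j s)" for j
        by (intro continuous_intros \<kappa>c Pc) auto
      show "\<kappa> s * a * sV j - V j s \<le> a+1 \<and> \<kappa> s * sP j - P j s \<le> a+1" if "s \<in> {1..t}" for j s
      proof -
        have k1': "\<kappa> s \<le> 1" using \<kappa>le[of s] k1 by linarith
        have "\<kappa> s * sV j \<le> 1" using k1' sV01[of j] \<kappa>pos[of s] by (intro mult_le_one) auto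
        then have "a * (\<kappa> s * sV j) \<le> a * 1" using a by (intro mult_left_mono) auto
        moreover have "\<kappa> s * sP j \<le> 1" using k1' sP01[of j] \<kappa>pos[of s] by (intro mult_le_one) auto
        moreover have "V j s > 0" "P j s > 0" using pos[of s j] that by auto
        moreover have "\<kappa> s * a * sV j = a * (\<kappa> s * sV j)" by (simp add: mult_ac)
        ultimately show ?thesis using a by linarith
      qed
      show "\<kappa> 1 * a * sV j - V j 1 \<le> 0 \<and> \<kappa> 1 * sP j - P j 1 \<le> 0" for j
        using init[of j] \<kappa>1 by simp
      show "t \<in> {1..t}" using t by auto
    next
      fix j s assume s: "1 < s" "s \<le> t" "0 < \<kappa> s * a * sV j - V j s"
      have Vs: "0 \<le> V j s" using pos[of s j] s by auto
      have sVp: "0 < sV j"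
      proof (rule ccontr)
        assume "\<not> 0 < sV j"
        then have "sV j = 0" using sV01[of j] by linarith
        then show False using s Vs by simp
      qed
      define Xv where "Xv = \<kappa> s * sV j"
      define X where "X = \<kappa> s * a * sV j - V j s"
      define Y1 where "Y1 = \<kappa> s * sP j - P j s"
      define Y2 where "Y2 = \<kappa> s * sP (j+1) - P (j+1) s"
      define D where "D = \<kappa>' s * a * sV j - (-2 * \<alpha> * V j s + \<beta> * (P j s + P (j + 1) s))"
      have Dd: "((\<lambda>s. \<kappa> s * a * sV j - V j s) has_real_derivative D) (at s)"
        unfolding D_def using s by (intro DERIV_diff DERIV_cmult_right \<kappa>d Vd) auto
      have Xv0: "0 \<le> Xv" unfolding Xv_def using \<kappa>pos[of s] sV01[of j] by simp
      have Vsub: "V j s = a*Xv - X" unfolding X_def Xv_def by (simp add: algebra_simps)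
      have "\<kappa> s * sP j + \<kappa> s * sP (j+1) = \<kappa> s * (sP j + sP (j+1))" by (simp add: distrib_left)
      also have "\<dots> = \<kappa> s * (2*c * sV j)" using id1[OF sVp] by simp
      also have "\<dots> = 2*c*Xv" unfolding Xv_def by (simp add: mult_ac)
      finally have Psum: "P j s + P (j+1) s = 2*c*Xv - Y1 - Y2" unfolding Y1_def Y2_def by linarith
      have eq: "D = \<kappa>' s * sV j * a + 2*((\<alpha>*a)*Xv) - 2*((\<beta>*c)*Xv) - 2*(\<alpha>*X) + \<beta>*Y1 + \<beta>*Y2"
        unfolding D_def by (simp only: Vsub Psum) (simp add: algebra_simps)
      have k1': "\<kappa>' s * sV j \<le> (\<mu>*\<kappa> s) * sV j" using mult_right_mono[OF \<kappa>'le[of s] sV01(1)[of j]] .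
      have "\<kappa>' s * sV j * a \<le> (\<mu>*\<kappa> s) * sV j * a" using mult_right_mono[OF k1' less_imp_le[OF a(1)]] .
      also have "\<dots> = (\<mu>*a)*Xv" unfolding Xv_def by (simp add: mult_ac)
      finally have A1: "\<kappa>' s * sV j * a \<le> (\<mu>*a)*Xv" .
      have "\<mu>*a \<le> (\<alpha>*\<gamma>)*a" using \<mu> a by (intro mult_right_mono) auto
      also have "\<dots> \<le> (\<alpha>*\<gamma>)*(\<rho>*c)" using a alpha_pos \<gamma> by (intro mult_left_mono) auto
      also have "\<dots> = \<beta>*c*\<gamma>" unfolding \<beta>eq by (simp add: mult_ac)
      finally have "\<mu>*a \<le> \<beta>*c*\<gamma>" .
      then have A2: "(\<mu>*a)*Xv \<le> (\<beta>*c*\<gamma>)*Xv" using Xv0 by (intro mult_right_mono) auto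
      have A3: "2*((\<alpha>*a)*Xv) - 2*((\<beta>*c)*Xv) = -2*((\<beta>*c*\<gamma>)*Xv)" by (simp only: a(2)) (simp add: algebra_simps)
      have A4: "0 \<le> (\<beta>*c*\<gamma>)*Xv" using beta_pos c \<gamma> Xv0 by simp
      have "\<beta>*Y1 \<le> K * max 0 Y1" "\<beta>*Y2 \<le> K * max 0 Y2" by (intro hm; use K beta_pos in auto)+
      moreover have "0 \<le> \<alpha>*X" "0 \<le> K*X" using s K alpha_pos unfolding X_def by auto
      moreover have "K * (X + max 0 Y1 + max 0 Y2) = K*X + K*max 0 Y1 + K * max 0 Y2" by (simp only: distrib_left)
      ultimately have "D \<le> K * (X + max 0 Y1 + max 0 Y2)" using eq A1 A2 A3 A4 by linarith
      then show "\<exists>D. ((\<lambda>s. \<kappa> s * a * sV j - V j s) has_real_derivative D) (at s) \<and>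
         D \<le> K * (\<kappa> s * a * sV j - V j s + max 0 (\<kappa> s * sP j - P j s) + max 0 (\<kappa> s * sP (j + 1) - P (j + 1) s))"
        using Dd unfolding X_def Y1_def Y2_def by blast
    next
      fix j s assume s: "1 < s" "s \<le> t" "0 < \<kappa> s * sP j - P j s"
      have Ps: "0 \<le> P j s" using pos[of s j] s by auto
      have sPp: "0 < sP j"
      proof (rule ccontr)
        assume "\<not> 0 < sP j"
        then have "sP j = 0" using sP01[of j] by linarith
        then show False using s Ps by simp
      qed
      define Yv where "Yv = \<kappa> s * sP j"
      define X1 where "X1 = \<kappa> s * a * sV j - V j s"
      define X0 where "X0 = \<kappa> s * a * sV (j-1) - V (j-1) s"
      define Y where "Y = \<kappa> s * sP j - P j s"
      define D where "D = \<kappa>' s * sP j - (f (P j s) + \<alpha> * (V j s + V (j - 1) s) - 2 * \<beta> * P j s)"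
      have Dd: "((\<lambda>s. \<kappa> s * sP j - P j s) has_real_derivative D) (at s)"
        unfolding D_def using s by (intro DERIV_diff DERIV_cmult_right \<kappa>d Pd) auto
      have Yvpos: "0 < Yv" using s Ps unfolding Yv_def by simp
      have Yvle: "Yv \<le> k1"
      proof -
        have "\<kappa> s * sP j \<le> k1 * 1" using \<kappa>le[of s] sP01[of j] \<kappa>pos[of s] k1 by (intro mult_mono) auto
        then show ?thesis unfolding Yv_def by simp
      qed
      have "\<kappa> s * a * sV j + \<kappa> s * a * sV (j-1) = \<kappa> s * a * (sV j + sV (j-1))" by (simp add: distrib_left)
      also have "\<dots> = \<kappa> s * a * (2*c * sP j)" using id2[OF sPp] by simp
      also have "\<dots> = 2*(a*c)*Yv" unfolding Yv_def by (simp add: mult_ac)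
      finally have Vsum: "V j s + V (j - 1) s = 2*(a*c)*Yv - X1 - X0" unfolding X1_def X0_def by linarith
      have Psub: "P j s = Yv - Y" unfolding Yv_def Y_def by simp
      have eq: "D = \<kappa>' s * sP j - f (P j s) - 2*((\<alpha>*(a*c))*Yv) + \<alpha>*X1 + \<alpha>*X0 + 2*(\<beta>*Yv) - 2*(\<beta>*Y)"
        unfolding D_def Vsum by (simp add: Psub algebra_simps)
      have "\<bar>P j s\<bar> \<le> R" "\<bar>Yv\<bar> \<le> R" using Ms[of s j] s Yvpos Yvle k1 unfolding R_def by auto
      then have "\<bar>f Yv - f (P j s)\<bar> \<le> L' * \<bar>Yv - P j s\<bar>" using L' by blast
      then have fl: "f Yv - L' * Y \<le> f (P j s)" unfolding Y_def Yv_def using s by auto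
      have fr: "r0 * Yv \<le> f Yv" using r0(2) Yvpos Yvle unfolding k1_def by auto
      have "\<kappa>' s * sP j \<le> (\<mu>*\<kappa> s) * sP j" using mult_right_mono[OF \<kappa>'le[of s] sP01(1)[of j]] .
      then have kl: "\<kappa>' s * sP j \<le> \<mu>*Yv" unfolding Yv_def by (simp add: mult_ac)
      have aac: "\<alpha>*(a*c) = \<beta>*c*(1-\<gamma>)*c" using a(2) by (metis mult.assoc)
      have "2*\<beta> - 2*(\<alpha>*(a*c)) = 2*(\<beta>*(1-c^2)) + 2*((\<beta>*\<gamma>)*c^2)" unfolding aac by (simp add: algebra_simps power2_eq_square)
      moreover have "(\<beta>*\<gamma>)*c^2 \<le> (\<beta>*\<gamma>)*1"
      proof -
        have "c^2 \<le> 1" using c by (simp add: power2_eq_square mult_le_one)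
        then show ?thesis using beta_pos \<gamma> by (intro mult_left_mono) auto
      qed
      ultimately have coef: "\<mu> - r0 - 2*(\<alpha>*(a*c)) + 2*\<beta> \<le> 0" using c2 \<gamma> \<mu> r0 by linarith
      have "(\<mu> - r0 - 2*(\<alpha>*(a*c)) + 2*\<beta>) * Yv \<le> 0" using coef Yvpos by (intro mult_nonpos_nonneg) auto
      moreover have "(\<mu> - r0 - 2*(\<alpha>*(a*c)) + 2*\<beta>) * Yv = \<mu>*Yv - r0*Yv - 2*((\<alpha>*(a*c))*Yv) + 2*(\<beta>*Yv)"
        by (simp add: algebra_simps)
      moreover have "L' * Y \<le> K * Y" by (intro hm2; use K L' s Y_def in auto)
      moreover have "\<alpha>*X1 \<le> K * max 0 X1" "\<alpha>*X0 \<le> K * max 0 X0" by (intro hm; use K alpha_pos in auto)+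
      moreover have "0 \<le> \<beta>*Y" using s beta_pos unfolding Y_def by auto
      moreover have "K * (Y + max 0 X1 + max 0 X0) = K*Y + K*max 0 X1 + K * max 0 X0" by (simp only: distrib_left)
      ultimately have "D \<le> K * (Y + max 0 X1 + max 0 X0)" using eq fl fr kl by linarith
      then show "\<exists>D. ((\<lambda>s. \<kappa> s * sP j - P j s) has_real_derivative D) (at s) \<and>
         D \<le> K * (\<kappa> s * sP j - P j s + max 0 (\<kappa> s * a * sV j - V j s) + max 0 (\<kappa> s * a * sV (j - 1) - V (j - 1) s))"
        using Dd unfolding X1_def X0_def Y_def by blast
    qed
    then show ?thesis by auto
  qed
  define T where "T = 2 + C/(\<mu>*\<eta>)"
  show ?thesis
  proof (intro exI[of _ T] allI impI)
    fix t j assume tT: "T \<le> t" and jJ: "\<bar>j\<bar> \<le> J"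
    have Cq: "0 \<le> C/(\<mu>*\<eta>)" using C \<mu> eta by simp
    have t1: "1 \<le> t" using tT Cq unfolding T_def by linarith
    have "C/(\<mu>*\<eta>) \<le> t - 1" using tT unfolding T_def by linarith
    then have "\<mu>*(C/(\<mu>*\<eta>)) \<le> \<mu>*(t-1)" using \<mu> by (intro mult_left_mono) auto
    moreover have "\<mu>*(C/(\<mu>*\<eta>)) = C/\<eta>" using \<mu> eta by (simp add: field_simps)
    moreover have "\<mu>*(t-1) \<le> exp (\<mu>*(t-1))" using exp_ge_add_one_self[of "\<mu>*(t-1)"] by linarith
    ultimately have "C/\<eta> \<le> exp (\<mu>*(t-1))" by linarith
    then have "\<eta>*(C/\<eta>) \<le> \<eta>*exp (\<mu>*(t-1))" using eta by (intro mult_left_mono) auto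
    then have Cle: "C \<le> \<eta>*exp (\<mu>*(t-1))" using eta by simp
    have "exp(-\<mu>*(t-1)) = exp(-(\<mu>*(t-1)))" by simp
    also have "\<dots> = inverse (exp (\<mu>*(t-1)))" by (rule exp_minus)
    finally have "q t = C / exp (\<mu>*(t-1))" unfolding q_def by (simp add: divide_inverse)
    also have "\<dots> \<le> \<eta>" using Cle by (simp add: pos_divide_le_eq mult.commute)
    finally have qt: "q t \<le> \<eta>" .
    have "(1-\<eta>)*(1+q t) = 1 + q t - \<eta> - \<eta>*q t" by (simp add: algebra_simps)
    moreover have "0 \<le> \<eta>*q t" using eta q0[of t] by simp
    ultimately have "(1-\<eta>)*(1+q t) \<le> 1" using qt by linarith
    then have "k1*((1-\<eta>)*(1+q t)) \<le> k1*1" using k1 by (intro mult_left_mono) auto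
    then have "k1*(1-\<eta>) \<le> k1/(1+q t)" using q0[of t] by (simp add: pos_le_divide_eq mult_ac)
    then have \<kappa>ge: "k1*(1-\<eta>) \<le> \<kappa> t" unfolding \<kappa>_def .
    have cen: "1 - \<eta> \<le> sP j" "1 - \<eta> \<le> sV j" using center[OF jJ] by auto
    have mn: "\<kappa> t * a * sV j \<le> V j t" "\<kappa> t * sP j \<le> P j t" using main[OF t1, of j] by auto
    have e0: "0 \<le> 1 - \<eta>" using eta by simp
    have "(k1*(1-\<eta>))*(1-\<eta>) \<le> \<kappa> t * sP j" using \<kappa>ge cen e0 \<kappa>pos[of t] k1 by (intro mult_mono) auto
    moreover have "(k1*(1-\<eta>))*(1-\<eta>) = (1-\<eta>)^3" unfolding k1_def by (simp add: power3_eq_cube)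
    ultimately have Pr: "(1-\<eta>)^3 \<le> P j t" using mn by simp
    have "\<rho>*(1-\<eta>) \<le> \<rho>*c" using c \<rho>pos by (intro mult_left_mono) auto
    then have "\<rho>*(1-\<eta>)*(1-\<eta>) \<le> \<rho>*c*(1-\<gamma>)" using \<gamma> e0 \<rho>pos c by (intro mult_mono) auto
    then have aa: "\<rho>*(1-\<eta>)*(1-\<eta>) \<le> a" unfolding a_def .
    have r1: "0 \<le> \<rho>*(1-\<eta>)*(1-\<eta>)" using \<rho>pos e0 by simp
    have kp: "0 \<le> \<kappa> t" using \<kappa>pos[of t] by simp
    have p1: "(k1*(1-\<eta>))*(\<rho>*(1-\<eta>)*(1-\<eta>)) \<le> \<kappa> t * a" using mult_mono[OF \<kappa>ge aa kp r1] .
    have "0 \<le> \<kappa> t * a" using kp a by simp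
    then have "(k1*(1-\<eta>))*(\<rho>*(1-\<eta>)*(1-\<eta>))*(1-\<eta>) \<le> \<kappa> t * a * sV j"
      using mult_mono[OF p1 cen(2) _ e0] by blast
    moreover have "(k1*(1-\<eta>))*(\<rho>*(1-\<eta>)*(1-\<eta>))*(1-\<eta>) = \<rho>*(1-\<eta>)^5" unfolding k1_def
      by (simp add: power_def algebra_simps numeral_eq_Suc)
    ultimately have "\<rho>*(1-\<eta>)^5 \<le> V j t" using mn by simp
    then show "\<beta>/\<alpha>*(1-\<eta>)^5 \<le> V j t \<and> (1-\<eta>)^3 \<le> P j t" using Pr unfolding \<rho>_def by simp
  qed
qed

end

theorem proposition6p3:
  fixes \<alpha> \<beta> :: real and f :: "real \<Rightarrow> real"
    and V0 P0 :: "int \<Rightarrow> real" and V P :: "int \<Rightarrow> real \<Rightarrow> real"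
  assumes alpha_pos: "\<alpha> > 0" and beta_pos: "\<beta> > 0"
    and f: "kpp_nonlinearity f"
    and V0_bdd: "bounded (range V0)" and P0_bdd: "bounded (range P0)"
    and V0_nonneg: "\<forall>j. V0 j \<ge> 0" and P0_nonneg: "\<forall>j. P0 j \<ge> 0"
    and nontriv: "\<exists>j. V0 j \<noteq> 0 \<or> P0 j \<noteq> 0"
    and V_cont: "\<forall>j. continuous_on {0..} (V j)"
    and P_cont: "\<forall>j. continuous_on {0..} (P j)"
    and V_ode: "\<forall>j t. t > 0 \<longrightarrow>
        (V j has_real_derivative (-2 * \<alpha> * V j t + \<beta> * (P j t + P (j + 1) t))) (at t)"
    and P_ode: "\<forall>j t. t > 0 \<longrightarrow>
        (P j has_real_derivative (f (P j t) + \<alpha> * (V j t + V (j - 1) t) - 2 * \<beta> * P j t)) (at t)"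
    and init: "\<forall>j. V j 0 = V0 j \<and> P j 0 = P0 j"
    and bdd: "\<forall>T\<ge>0. \<exists>M. \<forall>j. \<forall>t\<in>{0..T}. \<bar>V j t\<bar> \<le> M \<and> \<bar>P j t\<bar> \<le> M"
  shows "\<forall>J::int. \<forall>\<epsilon>>0. \<exists>T. \<forall>t\<ge>T. \<forall>j. \<bar>j\<bar> \<le> J \<longrightarrow>
           \<bar>V j t - \<beta> / \<alpha>\<bar> < \<epsilon> \<and> \<bar>P j t - 1\<bar> < \<epsilon>"
proof -
  have V0nn': "\<forall>j. V j 0 \<ge> 0" using init V0_nonneg by auto
  have P0nn': "\<forall>j. P j 0 \<ge> 0" using init P0_nonneg by auto
  interpret lsys \<alpha> \<beta> f V P
    using alpha_pos beta_pos f V_cont P_cont V_ode P_ode bdd V0nn' P0nn' by unfold_locales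
  have ex0: "\<exists>j0. V j0 0 > 0 \<or> P j0 0 > 0"
  proof -
    obtain j where "V0 j \<noteq> 0 \<or> P0 j \<noteq> 0" using nontriv by blast
    then have "V j 0 > 0 \<or> P j 0 > 0" using init V0_nonneg P0_nonneg
      by (metis order_le_less)
    then show ?thesis by blast
  qed
  have pos: "\<And>j t. t > 0 \<Longrightarrow> V j t > 0 \<and> P j t > 0" using pos_all[OF ex0] by blast
  show ?thesis
  proof (intro allI impI)
    fix J :: int and \<epsilon> :: real assume \<epsilon>: "\<epsilon> > 0"
    define \<rho> where "\<rho> = \<beta>/\<alpha>"
    have \<rho>pos: "\<rho> > 0" unfolding \<rho>_def using alpha_pos beta_pos by simp
    define \<eta> where "\<eta> = min (1/2) (\<epsilon>/(10*(1+\<rho>)))"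
    have \<eta>: "0 < \<eta>" "\<eta> \<le> 1/2"
    proof -
      show "0 < \<eta>" unfolding \<eta>_def using \<epsilon> \<rho>pos by auto
      show "\<eta> \<le> 1/2" unfolding \<eta>_def by (rule min.cobounded1)
    qed
    have \<eta>e: "10*\<eta>*(1+\<rho>) \<le> \<epsilon>"
    proof -
      have "\<eta> \<le> \<epsilon>/(10*(1+\<rho>))" unfolding \<eta>_def by simp
      then show ?thesis using \<rho>pos by (simp add: field_simps)
    qed
    have "10*\<eta> + 10*(\<eta>*\<rho>) \<le> \<epsilon>" using \<eta>e by (simp add: algebra_simps)
    moreover have "0 \<le> \<eta>*\<rho>" using \<eta> \<rho>pos by simp
    ultimately have \<eta>e2: "10*(\<eta>*\<rho>) \<le> \<epsilon>" "10*\<eta> \<le> \<epsilon>" using \<eta> by linarith+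
    obtain T1 where T1: "\<forall>t\<ge>T1. \<forall>j. V j t \<le> \<beta>/\<alpha>*(1+2*\<eta>) \<and> P j t \<le> 1+\<eta>" using upper[OF \<eta>(1)] by blast
    obtain T2 where T2: "\<forall>t\<ge>T2. \<forall>j. \<bar>j\<bar> \<le> J \<longrightarrow> \<beta>/\<alpha>*(1-\<eta>)^5 \<le> V j t \<and> (1-\<eta>)^3 \<le> P j t"
      using lower[OF pos \<eta>] by blast
    show "\<exists>T. \<forall>t\<ge>T. \<forall>j. \<bar>j\<bar> \<le> J \<longrightarrow> \<bar>V j t - \<beta> / \<alpha>\<bar> < \<epsilon> \<and> \<bar>P j t - 1\<bar> < \<epsilon>"
    proof (intro exI[of _ "max T1 T2"] allI impI)
      fix t j assume t: "max T1 T2 \<le> t" and j: "\<bar>j\<bar> \<le> J"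
      have up: "V j t \<le> \<rho>*(1+2*\<eta>)" "P j t \<le> 1+\<eta>" using T1 t unfolding \<rho>_def by auto
      have lo: "\<rho>*(1-\<eta>)^5 \<le> V j t" "(1-\<eta>)^3 \<le> P j t" using T2 t j unfolding \<rho>_def by auto
      have b5: "1 + real 5 * (-\<eta>) \<le> (1 + (-\<eta>))^5" using \<eta> by (intro Bernoulli_inequality) auto
      have b3: "1 + real 3 * (-\<eta>) \<le> (1 + (-\<eta>))^3" using \<eta> by (intro Bernoulli_inequality) auto
      have "\<rho>*(1 - 5*\<eta>) \<le> \<rho>*(1-\<eta>)^5" using b5 \<rho>pos by (intro mult_left_mono) auto
      then have "\<rho> - 5*(\<eta>*\<rho>) \<le> V j t" using lo by (simp add: algebra_simps)
      moreover have "V j t \<le> \<rho> + 2*(\<eta>*\<rho>)" using up by (simp add: algebra_simps)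
      moreover have "0 < \<eta>*\<rho>" using \<eta> \<rho>pos by simp
      ultimately have "\<bar>V j t - \<rho>\<bar> < \<epsilon>" using \<eta>e2 by linarith
      moreover have "\<bar>P j t - 1\<bar> < \<epsilon>" using up lo b3 \<eta>e2 \<eta> by simp
      ultimately show "\<bar>V j t - \<beta> / \<alpha>\<bar> < \<epsilon> \<and> \<bar>P j t - 1\<bar> < \<epsilon>" unfolding \<rho>_def by simp
    qed
  qed
qed

end
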